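(* \[\sum_{n\ge0}p_n(1123,1211)t^n=\frac{(1-t^2)\sqrt{(1-t)(1-t-4t^2)}}{2t^2(1-3t+t^2)}-\frac{1-3t-2t^2+14t^3-15t^4+3t^5}{2t^2(1-t)^2(1-3t+t^2)}.\]
   Context: Set partitions of $[n]$ are written in canonical sequential form (restricted growth words $\pi_1\cdots\pi_n$ with $\pi_1=1$, $\pi_{i+1}\le\max(\pi_1,\dots,\pi_i)+1$). A partition contains a pattern if it has a subsequence order-isomorphic to it; $p_n(T)$ counts partitions of $[n]$ avoiding every pattern in $T$ (with $p_0=1$). The square root is the branch that is a power series with constant term $1$. *)

theory Defs
  imports "HOL-Computational_Algebra.Formal_Power_Series" "HOL-Library.Sublist"
begin

text \<open>Canonical sequential form (restricted growth word) of a set partition of [n]: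
  entries are positive, the first entry is 1, and each entry is at most one more than
  the maximum of the preceding entries.\<close>
definition rgf :: "nat list \<Rightarrow> bool" where
  "rgf w \<longleftrightarrow> (\<forall>x\<in>set w. 1 \<le> x) \<and> (w \<noteq> [] \<longrightarrow> w ! 0 = 1) \<and>
     (\<forall>i. Suc i < length w \<longrightarrow> w ! Suc i \<le> Max (set (take (Suc i) w)) + 1)"

definition order_iso :: "nat list \<Rightarrow> nat list \<Rightarrow> bool" where
  "order_iso u p \<longleftrightarrow> length u = length p \<and>
     (\<forall>i<length p. \<forall>j<length p. (u ! i < u ! j \<longleftrightarrow> p ! i < p ! j))"

definition contains :: "nat list \<Rightarrow> nat list \<Rightarrow> bool" where
  "contains w p \<longleftrightarrow> (\<exists>u. subseq u w \<and> order_iso u p)"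

definition pcount :: "nat \<Rightarrow> nat list set \<Rightarrow> nat" where
  "pcount n T = card {w. length w = n \<and> rgf w \<and> (\<forall>p\<in>T. \<not> contains w p)}"

end

theory Submission
  imports Defs
begin

unbundle fps_syntax


primrec rg :: "nat \<Rightarrow> nat list \<Rightarrow> bool" where
  "rg m [] = True"
| "rg m (a # w) = (1 \<le> a \<and> a \<le> Suc m \<and> rg (max m a) w)"

lemma rg_iff: "rg m w \<longleftrightarrow> (\<forall>i<length w. 1 \<le> w!i \<and> w!i \<le> Suc (Max (insert m (set (take i w)))))"
proof (induction w arbitrary: m)
  case Nil then show ?case by simp
next
  case (Cons a w)
  have "(\<forall>i<length (a#w). P i) \<longleftrightarrow> P 0 \<and> (\<forall>i<length w. P (Suc i))" for P
    by (auto simp: less_Suc_eq_0_disj)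
  moreover have "Max (insert m (set (take (Suc i) (a#w)))) = Max (insert (max m a) (set (take i w)))" for i
    by (cases "set (take i w) = {}") (auto simp: insert_commute max.assoc max.commute)
  ultimately show ?case using Cons by simp
qed

lemma rgf_iff_rg: "rgf w \<longleftrightarrow> rg 0 w"
proof -
  have mx: "Max (insert 0 (set (take (Suc i) w))) = Max (set (take (Suc i) w))" if "Suc i < length w" for i
  proof -
    have "set (take (Suc i) w) \<noteq> {}" using that by (cases w) auto
    then show ?thesis by (simp add: max_def)
  qed
  show ?thesis
  proof
    assume "rgf w"
    then have a: "\<forall>x\<in>set w. 1 \<le> x" "w \<noteq> [] \<longrightarrow> w!0 = 1"
      "\<forall>i. Suc i < length w \<longrightarrow> w ! Suc i \<le> Max (set (take (Suc i) w)) + 1" by (auto simp: rgf_def)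
    show "rg 0 w" unfolding rg_iff
    proof (intro allI impI)
      fix i assume i: "i < length w"
      show "1 \<le> w!i \<and> w!i \<le> Suc (Max (insert 0 (set (take i w))))"
      proof (cases i)
        case 0 then show ?thesis using a i by auto
      next
        case (Suc j) then show ?thesis using a i mx[of j] by auto
      qed
    qed
  next
    assume "rg 0 w"
    then have h: "\<forall>i<length w. 1 \<le> w!i \<and> w!i \<le> Suc (Max (insert 0 (set (take i w))))" by (simp add: rg_iff)
    have "\<forall>x\<in>set w. 1 \<le> x" using h by (auto simp: in_set_conv_nth)
    moreover have "w \<noteq> [] \<longrightarrow> w!0 = 1" using h[rule_format, of 0] by auto
    moreover have "\<forall>i. Suc i < length w \<longrightarrow> w ! Suc i \<le> Max (set (take (Suc i) w)) + 1"
      using h mx by auto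
    ultimately show "rgf w" by (simp add: rgf_def)
  qed
qed

lemma subseq_idx: "subseq u w \<Longrightarrow> \<exists>idx. sorted_wrt (<) idx \<and> (\<forall>i\<in>set idx. i < length w) \<and> u = map (nth w) idx"
proof (induction rule: list_emb.induct)
  case (list_emb_Nil ys) then show ?case by (rule exI[of _ "[]"]) simp
next
  case (list_emb_Cons xs ys y)
  then obtain idx where "sorted_wrt (<) idx" "\<forall>i\<in>set idx. i < length ys" "xs = map (nth ys) idx" by blast
  then show ?case by (intro exI[of _ "map Suc idx"]) (auto simp: sorted_wrt_map)
next
  case (list_emb_Cons2 x y xs ys)
  then obtain idx where "sorted_wrt (<) idx" "\<forall>i\<in>set idx. i < length ys" "xs = map (nth ys) idx" by blast
  then show ?case using list_emb_Cons2.hyps by (intro exI[of _ "0 # map Suc idx"]) (auto simp: sorted_wrt_map)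
qed

lemma idx_subseq: "sorted_wrt (<) idx \<Longrightarrow> \<forall>i\<in>set idx. i < length w \<Longrightarrow> subseq (map (nth w) idx) w"
proof (induction w arbitrary: idx)
  case Nil then show ?case by (cases idx) auto
next
  case (Cons y ys)
  show ?case
  proof (cases "0 \<in> set idx")
    case True
    then obtain a r where ar: "idx = a # r" by (cases idx) auto
    with True Cons.prems(1) have "a = 0" by auto
    with ar have r: "idx = 0 # r" by simp
    then have "\<forall>i\<in>set r. 0 < i" using Cons.prems(1) by auto
    then have eq: "map (nth (y#ys)) r = map (nth ys) (map (\<lambda>i. i - 1) r)" by auto
    have sub: "subseq (map (nth ys) (map (\<lambda>i. i - 1) r)) ys"
      apply (rule Cons.IH)
      using Cons.prems r \<open>\<forall>i\<in>set r. 0 < i\<close>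
      by (auto simp: sorted_wrt_map intro!: sorted_wrt_mono_rel[of r "(<)"])
    have "subseq (map (nth (y#ys)) r) ys" unfolding eq by (rule sub)
    then show ?thesis using r by simp
  next
    case False
    then have "\<forall>i\<in>set idx. 0 < i" by (metis neq0_conv)
    then have eq: "map (nth (y#ys)) idx = map (nth ys) (map (\<lambda>i. i - 1) idx)" by auto
    have sub: "subseq (map (nth ys) (map (\<lambda>i. i - 1) idx)) ys"
      apply (rule Cons.IH)
      using Cons.prems \<open>\<forall>i\<in>set idx. 0 < i\<close>
      by (auto simp: sorted_wrt_map intro!: sorted_wrt_mono_rel[of idx "(<)"])
    have "subseq (map (nth (y#ys)) idx) ys" unfolding eq by (rule sub)
    then show ?thesis by (rule list_emb_Cons)
  qed
qed

lemma all4: "(\<forall>i<4::nat. P i) \<longleftrightarrow> P 0 \<and> P 1 \<and> P 2 \<and> P 3"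
  by (auto simp: numeral_eq_Suc less_Suc_eq)

lemma contains4: "length p = 4 \<Longrightarrow> contains w p \<longleftrightarrow>
   (\<exists>i j k l. i < j \<and> j < k \<and> k < l \<and> l < length w \<and> order_iso [w!i, w!j, w!k, w!l] p)"
proof
  assume "length p = 4" "contains w p"
  then obtain u where u: "subseq u w" "order_iso u p" by (auto simp: contains_def)
  then have "length u = 4" using \<open>length p = 4\<close> by (simp add: order_iso_def)
  from subseq_idx[OF u(1)] obtain idx where idx: "sorted_wrt (<) idx" "\<forall>i\<in>set idx. i < length w" "u = map (nth w) idx" by blast
  then have "length idx = 4" using \<open>length u = 4\<close> by simp
  then have "idx = [idx!0, idx!1, idx!2, idx!3]"
    by (auto intro!: nth_equalityI simp: numeral_eq_Suc less_Suc_eq)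
  then obtain i j k l where "idx = [i,j,k,l]" by blast
  then show "\<exists>i j k l. i < j \<and> j < k \<and> k < l \<and> l < length w \<and> order_iso [w!i, w!j, w!k, w!l] p"
    using idx u by auto
next
  assume "\<exists>i j k l. i < j \<and> j < k \<and> k < l \<and> l < length w \<and> order_iso [w!i, w!j, w!k, w!l] p"
  then obtain i j k l where h: "i < j" "j < k" "k < l" "l < length w" "order_iso [w!i, w!j, w!k, w!l] p" by blast
  have "subseq (map (nth w) [i,j,k,l]) w" by (rule idx_subseq) (use h in auto)
  then show "contains w p" using h unfolding contains_def by auto
qed

definition C1 :: "nat list \<Rightarrow> bool" where
  "C1 w \<longleftrightarrow> (\<exists>i j k l. i < j \<and> j < k \<and> k < l \<and> l < length w \<and> w!i = w!j \<and> w!j < w!k \<and> w!k < w!l)"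
definition C2 :: "nat list \<Rightarrow> bool" where
  "C2 w \<longleftrightarrow> (\<exists>i j k l. i < j \<and> j < k \<and> k < l \<and> l < length w \<and> w!i < w!j \<and> w!k = w!i \<and> w!l = w!i)"

lemma all4': "(\<forall>i<Suc (Suc (Suc (Suc 0))). P i) \<longleftrightarrow> P 0 \<and> P 1 \<and> P 2 \<and> P 3"
  using all4 by (simp add: numeral_eq_Suc)

lemma oi1: "order_iso [a,b,c,d] [Suc 0,Suc 0,2,3] \<longleftrightarrow> a = b \<and> b < c \<and> c < d"
  by (simp add: order_iso_def all4') (auto simp: nth_Cons')
lemma oi2: "order_iso [a,b,c,d] [Suc 0,2,Suc 0,Suc 0] \<longleftrightarrow> a < b \<and> c = a \<and> d = a"
  by (simp add: order_iso_def all4') (auto simp: nth_Cons')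

lemma contains_C1: "contains w [1,1,2,3] \<longleftrightarrow> C1 w"
  by (simp add: contains4 oi1 C1_def)
lemma contains_C2: "contains w [1,2,1,1] \<longleftrightarrow> C2 w"
  by (simp add: contains4 oi2 C2_def)


definition ser :: "(nat \<Rightarrow> 'a::comm_ring_1 fps) \<Rightarrow> 'a fps" where
  "ser Q = Abs_fps (\<lambda>k. \<Sum>n\<le>k. Q n $ (k - n))"

lemma ser_nth: "ser Q $ k = (\<Sum>n\<le>k. Q n $ (k - n))"
  by (simp add: ser_def)

lemma ser_trunc: "k \<le> K \<Longrightarrow> ser Q $ k = (\<Sum>n\<le>K. fps_X^n * Q n) $ k"
  unfolding ser_nth fps_sum_nth fps_X_power_mult_nth
  by (rule sym, rule sum.mono_neutral_cong_right) auto

lemma ser_add: "ser (\<lambda>n. P n + Q n) = ser P + ser Q"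
  by (rule fps_ext) (simp add: ser_nth sum.distrib)

lemma ser_diff: "ser (\<lambda>n. P n - Q n) = ser P - ser Q"
  by (rule fps_ext) (simp add: ser_nth sum_subtractf)

lemma ser_zero: "ser (\<lambda>n. 0) = 0"
  by (rule fps_ext) (simp add: ser_nth)

lemma ser_conv: "ser (\<lambda>n. \<Sum>i\<le>n. P i * Q (n - i)) = ser P * ser Q"
proof (rule fps_ext)
  fix k
  define g where "g i j = fps_X^(i+j) * (P i * Q j)" for i j
  have "ser (\<lambda>n. \<Sum>i\<le>n. P i * Q (n - i)) $ k = (\<Sum>N\<le>k. fps_X^N * (\<Sum>i\<le>N. P i * Q (N - i))) $ k"
    by (rule ser_trunc) simp
  also have "(\<Sum>N\<le>k. fps_X^N * (\<Sum>i\<le>N. P i * Q (N - i))) = (\<Sum>N\<le>k. \<Sum>i\<le>N. g i (N - i))"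
    by (auto simp: g_def sum_distrib_left intro!: sum.cong)
  also have "\<dots> = (\<Sum>(i,j)\<in>{(i,j). i+j \<le> k}. g i j)"
    by (rule sum.triangle_reindex_eq[symmetric])
  finally have L: "ser (\<lambda>n. \<Sum>i\<le>n. P i * Q (n - i)) $ k = (\<Sum>(i,j)\<in>{(i,j). i+j \<le> k}. g i j) $ k" .
  define TP where "TP = (\<Sum>n\<le>k. fps_X^n * P n)"
  define TQ where "TQ = (\<Sum>n\<le>k. fps_X^n * Q n)"
  have "(ser P * ser Q) $ k = (\<Sum>i=0..k. ser P $ i * ser Q $ (k - i))" by (rule fps_mult_nth)
  also have "\<dots> = (\<Sum>i=0..k. TP $ i * TQ $ (k - i))"
    unfolding TP_def TQ_def
    by (intro sum.cong refl) (metis atLeastAtMost_iff diff_le_self ser_trunc)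
  also have "\<dots> = (TP * TQ) $ k" by (simp add: fps_mult_nth)
  also have "TP * TQ = (\<Sum>(i,j)\<in>{..k}\<times>{..k}. g i j)"
    unfolding TP_def TQ_def sum_product g_def sum.cartesian_product
    by (intro sum.cong refl) (auto simp: power_add mult_ac)
  also have "(\<Sum>(i,j)\<in>{..k}\<times>{..k}. g i j) $ k = (\<Sum>(i,j)\<in>{(i,j). i+j \<le> k}. g i j) $ k"
    unfolding fps_sum_nth
    by (rule sum.mono_neutral_cong_right) (auto simp: g_def fps_X_power_mult_nth split: if_splits)
  finally show "ser (\<lambda>n. \<Sum>i\<le>n. P i * Q (n - i)) $ k = (ser P * ser Q) $ k" using L by simp
qed

lemma ser_delta: "ser (\<lambda>n. if n = m then c else 0) = fps_X^m * c"
proof (rule fps_ext)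
  fix k
  have "(\<Sum>n\<le>k. (if n = m then c else 0) $ (k - n)) = (\<Sum>n\<le>k. if n = m then c $ (k - n) else 0)"
    by (intro sum.cong) auto
  then show "ser (\<lambda>n. if n = m then c else 0) $ k = (fps_X^m * c) $ k"
    by (simp add: ser_nth fps_X_power_mult_nth sum.delta)
qed

lemma ser_cmult: "ser (\<lambda>n. c * Q n) = c * ser Q"
proof -
  have "ser (\<lambda>n. \<Sum>i\<le>n. (if i = 0 then c else 0) * Q (n - i)) = ser (\<lambda>n. if n = 0 then c else 0) * ser Q"
    by (rule ser_conv)
  moreover have "(\<lambda>n. \<Sum>i\<le>n. (if i = 0 then c else 0) * Q (n - i)) = (\<lambda>n. c * Q n)"
  proof
    fix n
    have "(\<Sum>i\<le>n. (if i = 0 then c else 0) * Q (n - i)) = (\<Sum>i\<le>n. if i = 0 then c * Q (n - i) else 0)"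
      by (intro sum.cong) auto
    then show "(\<Sum>i\<le>n. (if i = 0 then c else 0) * Q (n - i)) = c * Q n" by (simp add: sum.delta)
  qed
  ultimately show ?thesis using ser_delta[of 0 c] by simp
qed

lemma ser_shift: "ser (\<lambda>n. if n = 0 then 0 else Q (n - 1)) = fps_X * ser Q"
proof -
  have "ser (\<lambda>n. \<Sum>i\<le>n. (if i = 1 then 1 else 0) * Q (n - i)) = ser (\<lambda>n. if n = 1 then 1 else 0) * ser Q"
    by (rule ser_conv)
  moreover have "(\<lambda>n. \<Sum>i\<le>n. (if i = 1 then 1 else 0) * Q (n - i)) = (\<lambda>n. if n = 0 then 0 else Q (n - 1))"
  proof
    fix n
    have "(\<Sum>i\<le>n. (if i = 1 then 1 else 0) * Q (n - i)) = (\<Sum>i\<le>n. if i = 1 then Q (n - i) else 0)"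
      by (intro sum.cong) auto
    then show "(\<Sum>i\<le>n. (if i = 1 then 1 else 0) * Q (n - i)) = (if n = 0 then 0 else Q (n - 1))" by (simp add: sum.delta)
  qed
  moreover have "ser (\<lambda>n. if n = 1 then 1 else 0) = fps_X" using ser_delta[of 1 1] by simp
  ultimately show ?thesis by metis
qed

lemma ser_const: "ser (\<lambda>n. fps_const (a n)) = Abs_fps a"
  by (rule fps_ext) (simp add: ser_nth sum.delta' cong: if_cong)


definition av :: "nat list \<Rightarrow> bool" where
  "av w \<longleftrightarrow> rg 0 w \<and> \<not> C1 w \<and> \<not> C2 w"

definition AS :: "nat \<Rightarrow> nat list set" where
  "AS n = {w. length w = n \<and> av w}"

lemma pcount_AS: "pcount n {[1,1,2,3], [1,2,1,1]} = card (AS n)"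
  unfolding pcount_def AS_def av_def
  by (simp add: rgf_iff_rg contains_C1[simplified] contains_C2[simplified])

lemma rg_bound: "rg m w \<Longrightarrow> x \<in> set w \<Longrightarrow> x \<le> m + length w"
proof (induction w arbitrary: m)
  case Nil then show ?case by simp
next
  case (Cons a w)
  then show ?case by (auto dest!: Cons.IH)
qed

lemma rg_pos: "rg m w \<Longrightarrow> x \<in> set w \<Longrightarrow> 1 \<le> x"
  by (induction w arbitrary: m) auto

lemma finite_AS: "finite (AS n)"
proof -
  have "AS n \<subseteq> {xs. set xs \<subseteq> {..n} \<and> length xs = n}"
    by (auto simp: AS_def av_def dest: rg_bound)
  moreover have "finite {xs. set xs \<subseteq> {..n} \<and> length xs = n}"
    by (rule finite_lists_length_eq) simp
  ultimately show ?thesis by (rule finite_subset)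
qed

lemma rg_append: "rg m (xs @ ys) \<longleftrightarrow> rg m xs \<and> rg (fold max xs m) ys"
  by (induction xs arbitrary: m) (auto simp: max.commute)

lemma rg_map_Suc: "\<forall>x\<in>set v. 1 \<le> x \<Longrightarrow> rg (Suc m) (map Suc v) \<longleftrightarrow> rg m v"
  by (induction v arbitrary: m) auto

lemma fold_max_Suc: "fold max (map Suc xs) (Suc m) = Suc (fold max xs m)"
  by (induction xs arbitrary: m) auto

lemma fold_max_ge: "(m::nat) \<le> fold max xs m"
proof (induction xs arbitrary: m)
  case Nil then show ?case by simp
next
  case (Cons a xs)
  have "m \<le> max a m" by simp
  also have "\<dots> \<le> fold max xs (max a m)" by (rule Cons.IH)
  finally show ?case by simp
qed

lemma rg_first: "rg 0 w \<Longrightarrow> w \<noteq> [] \<Longrightarrow> w ! 0 = 1"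
  by (cases w) auto

lemma rg_letter: "rg 0 w \<Longrightarrow> i < length w \<Longrightarrow> 1 \<le> d \<Longrightarrow> d \<le> w!i \<Longrightarrow> \<exists>r\<le>i. w!r = d"
proof (induction i rule: less_induct)
  case (less i)
  show ?case
  proof (cases "w!i = d")
    case True then show ?thesis by blast
  next
    case False
    have h: "w!i \<le> Suc (Max (insert 0 (set (take i w))))" using less.prems(1,2) by (simp add: rg_iff)
    define M where "M = Max (insert 0 (set (take i w)))"
    have "d \<le> M" using h False less.prems(4) unfolding M_def by linarith
    then have "M \<noteq> 0" using less.prems(3) by linarith
    have "M \<in> insert 0 (set (take i w))" unfolding M_def by (rule Max_in) auto
    then have "M \<in> set (take i w)" using \<open>M \<noteq> 0\<close> by auto
    then obtain r where r: "r < length (take i w)" "take i w ! r = M" by (auto simp: in_set_conv_nth)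
    then have "r < i" "w!r = M" "r < length w" using less.prems(2) by auto
    then obtain r' where "r' \<le> r" "w!r' = d" using less.IH[of r] less.prems \<open>d \<le> M\<close> by auto
    then show ?thesis using \<open>r < i\<close> by (intro exI[of _ r']) auto
  qed
qed


definition dec :: "nat list \<Rightarrow> bool" where "dec xs \<longleftrightarrow> sorted_wrt (\<lambda>a b. b \<le> a) xs"

definition dsuf :: "nat list \<Rightarrow> nat" where
  "dsuf w = (GREATEST m. m \<le> length w \<and> dec (drop (length w - m) w))"

lemma dsuf_props: "dsuf w \<le> length w \<and> dec (drop (length w - dsuf w) w)"
  unfolding dsuf_def
  by (rule GreatestI_nat[of _ 0 "length w"]) (auto simp: dec_def)

lemma dsuf_le: "dsuf w \<le> length w" using dsuf_props by blast

lemma dsuf_valid: "j \<le> length w \<Longrightarrow> dec (drop (length w - j) w) \<longleftrightarrow> j \<le> dsuf w"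
proof
  assume "j \<le> length w" "dec (drop (length w - j) w)"
  then show "j \<le> dsuf w" unfolding dsuf_def by (intro Greatest_le_nat[of _ j "length w"]) auto
next
  assume j: "j \<le> length w" "j \<le> dsuf w"
  have "drop (length w - j) w = drop (dsuf w - j) (drop (length w - dsuf w) w)"
    using j dsuf_le[of w] by (simp add: drop_drop)
  then show "dec (drop (length w - j) w)" using dsuf_props[of w] sorted_wrt_drop unfolding dec_def by metis
qed

lemma dsuf_eqI:
  assumes "m \<le> length w" "dec (drop (length w - m) w)"
    "m < length w \<Longrightarrow> \<not> dec (drop (length w - Suc m) w)"
  shows "dsuf w = m"
proof -
  have "m \<le> dsuf w" using assms dsuf_valid by blast
  moreover have "\<not> m < dsuf w"
  proof
    assume "m < dsuf w"
    then have "Suc m \<le> dsuf w" "m < length w" using dsuf_le[of w] by auto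
    then show False using assms(3) dsuf_valid[of "Suc m" w] dsuf_le[of w] by auto
  qed
  ultimately show ?thesis by simp
qed

lemma dec_map_Suc: "dec (map Suc xs) \<longleftrightarrow> dec xs"
  by (simp add: dec_def sorted_wrt_map)

lemma dsuf_map_Suc: "dsuf (map Suc xs) = dsuf xs"
proof (rule dsuf_eqI)
  show "dsuf xs \<le> length (map Suc xs)" using dsuf_le[of xs] by simp
  show "dec (drop (length (map Suc xs) - dsuf xs) (map Suc xs))"
    using dsuf_props[of xs] by (simp add: drop_map dec_map_Suc)
  show "\<not> dec (drop (length (map Suc xs) - Suc (dsuf xs)) (map Suc xs))" if "dsuf xs < length (map Suc xs)"
    using that dsuf_valid[of "Suc (dsuf xs)" xs] by (simp add: drop_map dec_map_Suc)
qed

lemma dsuf_Cons_lt: "xs \<noteq> [] \<Longrightarrow> a < hd xs \<Longrightarrow> dsuf (a # xs) = dsuf xs"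
proof (rule dsuf_eqI)
  assume ne: "xs \<noteq> []" and a: "a < hd xs"
  show "dsuf xs \<le> length (a # xs)" using dsuf_le[of xs] by simp
  have "length (a # xs) - dsuf xs = Suc (length xs - dsuf xs)" using dsuf_le[of xs] by simp
  then show "dec (drop (length (a # xs) - dsuf xs) (a # xs))" using dsuf_props[of xs] by simp
  assume lt: "dsuf xs < length (a # xs)"
  show "\<not> dec (drop (length (a # xs) - Suc (dsuf xs)) (a # xs))"
  proof (cases "dsuf xs < length xs")
    case True
    then have "length xs - dsuf xs = Suc (length xs - Suc (dsuf xs))" by arith
    then have "drop (length (a # xs) - Suc (dsuf xs)) (a # xs) = drop (length xs - Suc (dsuf xs)) xs"
      by simp
    then show ?thesis using True dsuf_valid[of "Suc (dsuf xs)" xs] by simp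
  next
    case False
    then have "dsuf xs = length xs" using dsuf_le[of xs] by simp
    then have "drop (length (a # xs) - Suc (dsuf xs)) (a # xs) = a # xs" by simp
    moreover have "\<not> dec (a # xs)" using ne a by (cases xs) (auto simp: dec_def)
    ultimately show ?thesis by simp
  qed
qed

lemma dsuf_snoc: "\<forall>x\<in>set xs. a \<le> x \<Longrightarrow> dsuf (xs @ [a]) = Suc (dsuf xs)"
proof (rule dsuf_eqI)
  assume h: "\<forall>x\<in>set xs. a \<le> x"
  show "Suc (dsuf xs) \<le> length (xs @ [a])" using dsuf_le[of xs] by simp
  have "drop (length (xs @ [a]) - Suc (dsuf xs)) (xs @ [a]) = drop (length xs - dsuf xs) xs @ [a]"
    using dsuf_le[of xs] by simp
  moreover have "dec (drop (length xs - dsuf xs) xs @ [a])"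
    using dsuf_props[of xs] h by (auto simp: dec_def sorted_wrt_append dest: in_set_dropD)
  ultimately show "dec (drop (length (xs @ [a]) - Suc (dsuf xs)) (xs @ [a]))" by simp
  assume "Suc (dsuf xs) < length (xs @ [a])"
  then have lt: "dsuf xs < length xs" by simp
  have "drop (length (xs @ [a]) - Suc (Suc (dsuf xs))) (xs @ [a]) = drop (length xs - Suc (dsuf xs)) xs @ [a]"
    using lt by simp
  moreover have "\<not> dec (drop (length xs - Suc (dsuf xs)) xs)" using lt dsuf_valid[of "Suc (dsuf xs)" xs] by simp
  ultimately show "\<not> dec (drop (length (xs @ [a]) - Suc (Suc (dsuf xs))) (xs @ [a]))"
    by (simp add: dec_def sorted_wrt_append)
qed

lemma dsuf_app: "xs \<noteq> [] \<Longrightarrow> ys \<noteq> [] \<Longrightarrow> dec ys \<Longrightarrow> last xs < hd ys \<Longrightarrow> dsuf (xs @ ys) = length ys"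
proof (rule dsuf_eqI)
  assume h: "xs \<noteq> []" "ys \<noteq> []" "dec ys" "last xs < hd ys"
  show "length ys \<le> length (xs @ ys)" by simp
  show "dec (drop (length (xs @ ys) - length ys) (xs @ ys))" using h by simp
  have "drop (length xs - 1) xs = [last xs]"
    using h(1) by (cases xs rule: rev_cases) auto
  moreover have "length (xs @ ys) - Suc (length ys) = length xs - 1" by simp
  ultimately have "drop (length (xs @ ys) - Suc (length ys)) (xs @ ys) = last xs # ys"
    using h(1) by simp
  moreover have "\<not> dec (last xs # ys)" using h by (cases ys) (auto simp: dec_def)
  ultimately show "\<not> dec (drop (length (xs @ ys) - Suc (length ys)) (xs @ ys))" by simp
qed

lemma dsuf_Nil: "dsuf [] = 0"
  using dsuf_le[of "[]"] by simp

lemma dsuf_single: "dsuf [a] = 1"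
  using dsuf_snoc[of "[]" a] by (simp add: dsuf_Nil)

lemma dsuf_rep: "dsuf (replicate n (1::nat)) = n"
  by (rule dsuf_eqI) (auto simp: dec_def sorted_wrt_iff_nth_less)

lemma dsuf_full: "rg 0 v \<Longrightarrow> dsuf v = length v \<Longrightarrow> v = replicate (length v) 1"
proof (rule nth_equalityI)
  assume r: "rg 0 v" and d: "dsuf v = length v"
  then have dv: "dec v" using dsuf_props[of v] by simp
  show "length v = length (replicate (length v) 1)" by simp
  fix i assume i: "i < length v"
  then have "v ! 0 = 1" using rg_first[OF r] by (cases v) auto
  moreover have "v ! i \<le> v ! 0" using dv i by (cases i) (auto simp: dec_def sorted_wrt_iff_nth_less)
  moreover have "1 \<le> v!i" using rg_pos[OF r] i by auto
  ultimately show "v ! i = replicate (length v) 1 ! i" using i by simp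
qed


lemma C_embed:
  assumes mono: "\<And>a b. a < b \<Longrightarrow> b < length v \<Longrightarrow> f a < f b"
    and val: "\<And>a. a < length v \<Longrightarrow> f a < length w \<and> w!(f a) = Suc (v!a)"
  shows "(C1 v \<longrightarrow> C1 w) \<and> (C2 v \<longrightarrow> C2 w)"
proof (intro conjI impI)
  assume "C1 v"
  then obtain i j k l where h: "i < j" "j < k" "k < l" "l < length v" "v!i = v!j" "v!j < v!k" "v!k < v!l"
    unfolding C1_def by blast
  have "f i < f j" "f j < f k" "f k < f l" using h mono by auto
  moreover have "f l < length w" using val h by auto
  moreover have "w!(f i) = w!(f j)" "w!(f j) < w!(f k)" "w!(f k) < w!(f l)" using h val[of i] val[of j] val[of k] val[of l] by auto
  ultimately show "C1 w" unfolding C1_def by blast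
next
  assume "C2 v"
  then obtain i j k l where h: "i < j" "j < k" "k < l" "l < length v" "v!i < v!j" "v!k = v!i" "v!l = v!i"
    unfolding C2_def by blast
  have "f i < f j" "f j < f k" "f k < f l" using h mono by auto
  moreover have "f l < length w" using val h by auto
  moreover have "w!(f i) < w!(f j)" "w!(f k) = w!(f i)" "w!(f l) = w!(f i)" using h val[of i] val[of j] val[of k] val[of l] by auto
  ultimately show "C2 w" unfolding C2_def by blast
qed

lemma C_Cons_Suc:
  assumes pos: "\<forall>x\<in>set v. 1 \<le> x"
  shows "C1 (1 # map Suc v) \<longleftrightarrow> C1 v" "C2 (1 # map Suc v) \<longleftrightarrow> C2 v"
proof -
  let ?w = "1 # map Suc v"
  have e: "(C1 v \<longrightarrow> C1 ?w) \<and> (C2 v \<longrightarrow> C2 ?w)"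
    by (rule C_embed[where f=Suc]) auto
  have w0: "?w ! 0 = 1" by simp
  have wp: "?w ! p = Suc (v ! (p - 1))" if "0 < p" "p < length ?w" for p
    using that by (cases p) auto
  have big: "2 \<le> ?w ! p" if "0 < p" "p < length ?w" for p
    using wp[OF that] pos that nth_mem[of "p - 1" v] by auto
  show "C1 ?w \<longleftrightarrow> C1 v"
  proof
    assume "C1 ?w"
    then obtain i j k l where h: "i < j" "j < k" "k < l" "l < length ?w" "?w!i = ?w!j" "?w!j < ?w!k" "?w!k < ?w!l"
      unfolding C1_def by blast
    have "i \<noteq> 0"
    proof
      assume "i = 0"
      then have "?w!j = 1" using h by simp
      moreover have "2 \<le> ?w!j" using big[of j] h by simp
      ultimately show False by simp
    qed
    then have "i - 1 < j - 1" "j - 1 < k - 1" "k - 1 < l - 1" "l - 1 < length v"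
      "v!(i-1) = v!(j-1)" "v!(j-1) < v!(k-1)" "v!(k-1) < v!(l-1)"
      using h wp[of i] wp[of j] wp[of k] wp[of l] by auto
    then show "C1 v" unfolding C1_def by blast
  qed (use e in blast)
  show "C2 ?w \<longleftrightarrow> C2 v"
  proof
    assume "C2 ?w"
    then obtain i j k l where h: "i < j" "j < k" "k < l" "l < length ?w" "?w!i < ?w!j" "?w!k = ?w!i" "?w!l = ?w!i"
      unfolding C2_def by blast
    have "i \<noteq> 0"
    proof
      assume "i = 0"
      then have "?w!k = 1" using h by simp
      moreover have "2 \<le> ?w!k" using big[of k] h by simp
      ultimately show False by simp
    qed
    then have "i - 1 < j - 1" "j - 1 < k - 1" "k - 1 < l - 1" "l - 1 < length v"
      "v!(i-1) < v!(j-1)" "v!(k-1) = v!(i-1)" "v!(l-1) = v!(i-1)"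
      using h wp[of i] wp[of j] wp[of k] wp[of l] by auto
    then show "C2 v" unfolding C2_def by blast
  qed (use e in blast)
qed

lemma av_Cons_Suc: "\<forall>x\<in>set v. 1 \<le> x \<Longrightarrow> av (1 # map Suc v) \<longleftrightarrow> av v"
  unfolding av_def using C_Cons_Suc[of v] rg_map_Suc[of v 0] by simp

definition bld :: "nat list \<Rightarrow> nat list \<Rightarrow> nat list" where
  "bld x y = 1 # map Suc x @ 1 # map Suc y"

lemma rg_bld: "\<forall>a\<in>set (x @ y). 1 \<le> a \<Longrightarrow> rg 0 (bld x y) \<longleftrightarrow> rg 0 (x @ y)"
proof -
  assume pos: "\<forall>a\<in>set (x @ y). 1 \<le> a"
  have "rg 0 (bld x y) \<longleftrightarrow> rg (Suc 0) (map Suc x) \<and> rg (fold max (map Suc x) (Suc 0)) (1 # map Suc y)"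
    by (simp add: bld_def rg_append)
  also have "\<dots> \<longleftrightarrow> rg 0 x \<and> rg (Suc (fold max x 0)) (map Suc y)"
    using pos by (simp add: fold_max_Suc rg_map_Suc)
  also have "\<dots> \<longleftrightarrow> rg 0 x \<and> rg (fold max x 0) y"
    using pos by (simp add: rg_map_Suc)
  also have "\<dots> \<longleftrightarrow> rg 0 (x @ y)" by (simp add: rg_append)
  finally show ?thesis .
qed

context
  fixes x y :: "nat list"
  assumes pos: "\<forall>a\<in>set (x @ y). 1 \<le> a"
begin

definition psi :: "nat \<Rightarrow> nat" where "psi p = (if p \<le> length x then p - 1 else p - 2)"

lemma len_bld: "length (bld x y) = length (x @ y) + 2"
  by (simp add: bld_def)

lemma bld_nth: "p < length (bld x y) \<Longrightarrow>
  bld x y ! p = (if p = 0 \<or> p = Suc (length x) then 1 else Suc ((x @ y) ! psi p))"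
proof -
  assume p: "p < length (bld x y)"
  have w: "bld x y = (1 # map Suc x) @ (1 # map Suc y)" by (simp add: bld_def)
  show ?thesis
  proof (cases "p \<le> length x")
    case True
    then show ?thesis unfolding w psi_def by (cases p) (auto simp: nth_append)
  next
    case False
    then obtain r where r: "p = Suc (length x) + r" by (metis add_Suc less_imp_Suc_add not_le_imp_less)
    then show ?thesis using p unfolding w psi_def by (cases r) (auto simp: nth_append bld_def)
  qed
qed


lemma psi_lt: "p < length (bld x y) \<Longrightarrow> \<not> (p = 0 \<or> p = Suc (length x)) \<Longrightarrow> psi p < length (x @ y)"
  by (auto simp: psi_def len_bld)

lemma bld_big: "p < length (bld x y) \<Longrightarrow> \<not> (p = 0 \<or> p = Suc (length x)) \<Longrightarrow> 2 \<le> bld x y ! p"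
proof -
  assume a: "p < length (bld x y)" "\<not> (p = 0 \<or> p = Suc (length x))"
  then have "psi p < length (x @ y)" by (rule psi_lt)
  then have "(x @ y) ! psi p \<in> set (x @ y)" by (rule nth_mem)
  then have "1 \<le> (x @ y) ! psi p" using pos by blast
  then show ?thesis using bld_nth[OF a(1)] a(2) by simp
qed

lemma bld_one: "p < length (bld x y) \<Longrightarrow> bld x y ! p = 1 \<longleftrightarrow> p = 0 \<or> p = Suc (length x)"
  using bld_nth[of p] bld_big[of p] by fastforce

lemma bld_pos: "p < length (bld x y) \<Longrightarrow> 1 \<le> bld x y ! p"
  using bld_big[of p] bld_one[of p] by fastforce

lemma psi_mono: "p < p' \<Longrightarrow> \<not> (p = 0 \<or> p = Suc (length x)) \<Longrightarrow> \<not> (p' = 0 \<or> p' = Suc (length x)) \<Longrightarrow> psi p < psi p'"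
  by (auto simp: psi_def)

lemma C_bld_embed: "(C1 (x @ y) \<longrightarrow> C1 (bld x y)) \<and> (C2 (x @ y) \<longrightarrow> C2 (bld x y))"
proof (rule C_embed[where f = "\<lambda>q. if q < length x then Suc q else q + 2"])
  fix a b assume "a < b" "b < length (x @ y)"
  then show "(if a < length x then Suc a else a + 2) < (if b < length x then Suc b else b + 2)" by auto
next
  fix a assume a: "a < length (x @ y)"
  show "(if a < length x then Suc a else a + 2) < length (bld x y) \<and>
        bld x y ! (if a < length x then Suc a else a + 2) = Suc ((x @ y) ! a)"
    using a bld_nth[of "if a < length x then Suc a else a + 2"] by (auto simp: len_bld psi_def)
qed

lemma C1_bld: "C1 (bld x y) \<longleftrightarrow> C1 (x @ y) \<or> \<not> dec y"
proof
  assume "C1 (bld x y)"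
  then obtain i j k l where h: "i < j" "j < k" "k < l" "l < length (bld x y)"
    "bld x y!i = bld x y!j" "bld x y!j < bld x y!k" "bld x y!k < bld x y!l"
    unfolding C1_def by blast
  show "C1 (x @ y) \<or> \<not> dec y"
  proof (cases "bld x y ! i = 1")
    case True
    then have "i = 0 \<or> i = Suc (length x)" "j = 0 \<or> j = Suc (length x)" using h bld_one by auto
    then have ij: "i = 0" "j = Suc (length x)" using h by auto
    have kn: "\<not> (k = 0 \<or> k = Suc (length x))" "\<not> (l = 0 \<or> l = Suc (length x))" using h ij by auto
    have ge: "\<not> k - 2 < length x" "\<not> l - 2 < length x" "\<not> k \<le> length x" "\<not> l \<le> length x" using h ij by auto
    have "bld x y ! k = Suc (y ! (k - 2 - length x))" "bld x y ! l = Suc (y ! (l - 2 - length x))"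
      using bld_nth[of k] bld_nth[of l] h kn ij ge unfolding psi_def by (simp_all add: nth_append)
    then have "y ! (k - 2 - length x) < y ! (l - 2 - length x)" "k - 2 - length x < l - 2 - length x"
      "l - 2 - length x < length y" using h ij by (auto simp: len_bld)
    then have "\<not> dec y" unfolding dec_def sorted_wrt_iff_nth_less by fastforce
    then show ?thesis by simp
  next
    case False
    have ns: "\<not> (p = 0 \<or> p = Suc (length x))" if "p \<in> {i,j,k,l}" for p
    proof -
      have "bld x y ! p \<noteq> 1" using that h False bld_pos[of i] by auto
      then show ?thesis using bld_one[of p] that h by auto
    qed
    have "psi i < psi j" "psi j < psi k" "psi k < psi l" "psi l < length (x @ y)"
      using psi_mono ns h psi_lt by auto
    moreover have "(x@y) ! psi i = (x@y) ! psi j" "(x@y) ! psi j < (x@y) ! psi k" "(x@y) ! psi k < (x@y) ! psi l"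
      using h bld_nth[of i] bld_nth[of j] bld_nth[of k] bld_nth[of l] ns by auto
    ultimately show ?thesis unfolding C1_def by blast
  qed
next
  assume "C1 (x @ y) \<or> \<not> dec y"
  then show "C1 (bld x y)"
  proof
    assume "C1 (x @ y)" then show ?thesis using C_bld_embed by blast
  next
    assume "\<not> dec y"
    then obtain a b where ab: "a < b" "b < length y" "y ! a < y ! b"
      unfolding dec_def sorted_wrt_iff_nth_less by (auto simp: not_le)
    let ?k = "length x + 2 + a" and ?l = "length x + 2 + b"
    have "bld x y ! ?k = Suc (y ! a)" "bld x y ! ?l = Suc (y ! b)"
      using bld_nth[of ?k] bld_nth[of ?l] ab by (auto simp: len_bld psi_def nth_append)
    moreover have "bld x y ! 0 = 1" "bld x y ! Suc (length x) = 1" using bld_one by (auto simp: len_bld)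
    moreover have "1 \<le> y ! a" using pos ab nth_mem[of a y] by auto
    ultimately show ?thesis unfolding C1_def using ab
      by (intro exI[of _ 0] exI[of _ "Suc (length x)"] exI[of _ ?k] exI[of _ ?l]) (auto simp: len_bld)
  qed
qed

lemma C2_bld: "C2 (bld x y) \<longleftrightarrow> C2 (x @ y)"
proof
  assume "C2 (bld x y)"
  then obtain i j k l where h: "i < j" "j < k" "k < l" "l < length (bld x y)"
    "bld x y!i < bld x y!j" "bld x y!k = bld x y!i" "bld x y!l = bld x y!i"
    unfolding C2_def by blast
  have "bld x y ! i \<noteq> 1"
  proof
    assume "bld x y ! i = 1"
    then have "i = 0 \<or> i = Suc (length x)" "k = 0 \<or> k = Suc (length x)" "l = 0 \<or> l = Suc (length x)"
      using h bld_one by auto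
    then show False using h by auto
  qed
  have ns: "\<not> (p = 0 \<or> p = Suc (length x))" if "p \<in> {i,j,k,l}" for p
  proof -
    have "bld x y ! p \<noteq> 1" using that h \<open>bld x y ! i \<noteq> 1\<close> bld_pos[of i] by auto
    then show ?thesis using bld_one[of p] that h by auto
  qed
  have "psi i < psi j" "psi j < psi k" "psi k < psi l" "psi l < length (x @ y)"
    using psi_mono ns h psi_lt by auto
  moreover have "(x@y) ! psi i < (x@y) ! psi j" "(x@y) ! psi k = (x@y) ! psi i" "(x@y) ! psi l = (x@y) ! psi i"
    using h bld_nth[of i] bld_nth[of j] bld_nth[of k] bld_nth[of l] ns by auto
  ultimately show "C2 (x @ y)" unfolding C2_def by blast
qed (use C_bld_embed in blast)

lemma av_bld: "av (bld x y) \<longleftrightarrow> av (x @ y) \<and> dec y"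
  unfolding av_def using rg_bld[OF pos] C1_bld C2_bld by auto

end


lemma dsuf_bld_Nil: "x \<noteq> [] \<Longrightarrow> \<forall>a\<in>set x. 1 \<le> a \<Longrightarrow> dsuf (bld x []) = Suc (dsuf x)"
proof -
  assume ne: "x \<noteq> []" and pos: "\<forall>a\<in>set x. 1 \<le> a"
  have "bld x [] = (1 # map Suc x) @ [1]" by (simp add: bld_def)
  moreover have "dsuf ((1 # map Suc x) @ [1]) = Suc (dsuf (1 # map Suc x))"
    by (rule dsuf_snoc) auto
  moreover have "dsuf (1 # map Suc x) = dsuf (map Suc x)"
  proof (rule dsuf_Cons_lt)
    show "map Suc x \<noteq> []" using ne by simp
    have "hd x \<in> set x" using ne by simp
    then have "1 \<le> hd x" using pos by blast
    then show "1 < hd (map Suc x)" using ne by (simp add: hd_map)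
  qed
  ultimately show ?thesis by (simp add: dsuf_map_Suc)
qed

lemma dsuf_bld: "y \<noteq> [] \<Longrightarrow> dec y \<Longrightarrow> \<forall>a\<in>set y. 1 \<le> a \<Longrightarrow> dsuf (bld x y) = length y"
proof -
  assume ne: "y \<noteq> []" and d: "dec y" and pos: "\<forall>a\<in>set y. 1 \<le> a"
  have "bld x y = (1 # map Suc x @ [1]) @ map Suc y" by (simp add: bld_def)
  moreover have "dsuf ((1 # map Suc x @ [1]) @ map Suc y) = length (map Suc y)"
  proof (rule dsuf_app)
    show "map Suc y \<noteq> []" "dec (map Suc y)" using ne d by (simp_all add: dec_map_Suc)
    have "hd y \<in> set y" using ne by simp
    then have "1 \<le> hd y" using pos by blast
    then show "last (1 # map Suc x @ [1]) < hd (map Suc y)" using ne by (simp add: hd_map)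
  qed simp
  ultimately show ?thesis by simp
qed

lemma bld_inj: "\<forall>a\<in>set (x @ y). 1 \<le> a \<Longrightarrow> bld x y = bld x' y' \<Longrightarrow> x = x' \<and> y = y'"
proof -
  assume pos: "\<forall>a\<in>set (x @ y). 1 \<le> a" and e: "bld x y = bld x' y'"
  then have eq: "map Suc x @ 1 # map Suc y = map Suc x' @ 1 # map Suc y'" by (simp add: bld_def)
  have h1: "1 \<notin> set (map Suc x)" and h2: "1 \<notin> set (map Suc y)" using pos by auto
  have "map Suc x = map Suc x' \<and> map Suc y = map Suc y'"
    using append_Cons_eq_iff[OF h1 h2, of "map Suc x'" "map Suc y'"] eq by blast
  then show ?thesis by (simp add: inj_map_eq_map)
qed

definition zw :: "nat \<Rightarrow> nat \<Rightarrow> nat \<Rightarrow> nat list" where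
  "zw n p q = map (\<lambda>i. if i < p \<or> i = q then 1 else 2) [0..<n]"

definition ZD :: "nat \<Rightarrow> (nat \<times> nat) set" where
  "ZD n = {(p,q). 2 \<le> p \<and> p \<le> n \<and> (q = n \<or> (p < q \<and> q < n))}"

lemma finite_ZD: "finite (ZD n)"
  by (rule finite_subset[of _ "{..n} \<times> {..n}"]) (auto simp: ZD_def)

lemma zw_nth: "i < n \<Longrightarrow> zw n p q ! i = (if i < p \<or> i = q then 1 else 2)"
  by (simp add: zw_def)

lemma len_zw: "length (zw n p q) = n" by (simp add: zw_def)

lemma zw_av:
  assumes "(p,q) \<in> ZD n" shows "av (zw n p q)"
proof -
  let ?w = "zw n p q"
  have pq: "2 \<le> p" "p \<le> n" "q = n \<or> (p < q \<and> q < n)" using assms by (auto simp: ZD_def)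
  have v12: "?w ! i = 1 \<or> ?w ! i = 2" if "i < n" for i using that by (simp add: zw_nth)
  have rg: "rg 0 ?w"
    unfolding rg_iff
  proof (intro allI impI)
    fix i assume i: "i < length ?w"
    show "1 \<le> ?w ! i \<and> ?w ! i \<le> Suc (Max (insert 0 (set (take i ?w))))"
    proof (cases i)
      case 0 then show ?thesis using i pq by (simp add: zw_nth len_zw)
    next
      case (Suc j)
      have l: "0 < length (take i ?w)" using i Suc by simp
      have "take i ?w ! 0 = ?w ! 0" using Suc by simp
      then have "?w ! 0 \<in> set (take i ?w)" using nth_mem[OF l] by simp
      moreover have "?w ! 0 = 1" using i pq by (simp add: zw_nth len_zw)
      ultimately have "1 \<le> Max (insert 0 (set (take i ?w)))" using Max_ge[of "insert 0 (set (take i ?w))" 1] by simp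
      then show ?thesis using v12[of i] i by (auto simp: len_zw)
    qed
  qed
  have c1: "\<not> C1 ?w"
  proof
    assume "C1 ?w"
    then obtain i j k l where h: "i < j" "j < k" "k < l" "l < length ?w" "?w!i = ?w!j" "?w!j < ?w!k" "?w!k < ?w!l"
      unfolding C1_def by blast
    have "j < n" "k < n" "l < n" using h by (auto simp: len_zw)
    then have "?w!j = 1 \<or> ?w!j = 2" "?w!k = 1 \<or> ?w!k = 2" "?w!l = 1 \<or> ?w!l = 2" using v12 by blast+
    then show False using h(6,7) by auto
  qed
  have c2: "\<not> C2 ?w"
  proof
    assume "C2 ?w"
    then obtain i j k l where h: "i < j" "j < k" "k < l" "l < length ?w" "?w!i < ?w!j" "?w!k = ?w!i" "?w!l = ?w!i"
      unfolding C2_def by blast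
    have n: "i < n" "j < n" "k < n" "l < n" using h(1-4) by (auto simp: len_zw)
    then have "?w!i = 1 \<or> ?w!i = 2" "?w!j = 1 \<or> ?w!j = 2" using v12 by blast+
    then have a: "?w!i = 1" "?w!j = 2" using h(5) by auto
    have wj: "\<not> (j < p \<or> j = q)" using a(2) zw_nth[OF n(2), of p q] by (simp split: if_splits)
    have wk1: "?w ! k = 1" using h(6) a(1) by (rule trans)
    have wl1: "?w ! l = 1" using h(7) a(1) by (rule trans)
    have wk: "k < p \<or> k = q" using wk1 zw_nth[OF n(3), of p q] by (cases "k < p \<or> k = q") simp_all
    have wl: "l < p \<or> l = q" using wl1 zw_nth[OF n(4), of p q] by (cases "l < p \<or> l = q") simp_all
    have "k = q" "l = q" using wj wk wl h(1,2,3) by auto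
    then show False using h by simp
  qed
  show ?thesis using rg c1 c2 by (simp add: av_def)
qed

lemma zw_inj: "inj_on (\<lambda>(p,q). zw n p q) (ZD n)"
proof (rule inj_onI, clarify)
  fix p q p' q' assume a: "(p,q) \<in> ZD n" "(p',q') \<in> ZD n" "zw n p q = zw n p' q'"
  have e: "\<And>i. i < n \<Longrightarrow> (i < p \<or> i = q) = (i < p' \<or> i = q')"
  proof -
    fix i assume "i < n"
    have "zw n p q ! i = zw n p' q' ! i" using a(3) by (rule arg_cong)
    then have "(if i < p \<or> i = q then 1 else 2::nat) = (if i < p' \<or> i = q' then 1 else 2)"
      unfolding zw_nth[OF \<open>i < n\<close>] .
    then show "(i < p \<or> i = q) = (i < p' \<or> i = q')" by (auto split: if_splits)
  qed
  have pq: "2 \<le> p" "p \<le> n" "q = n \<or> (p < q \<and> q < n)" "2 \<le> p'" "p' \<le> n" "q' = n \<or> (p' < q' \<and> q' < n)"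
    using a by (auto simp: ZD_def)
  have "p = p'"
  proof (rule ccontr)
    assume "p \<noteq> p'"
    then show False
    proof (cases "p < p'")
      case True then show ?thesis using e[of p] pq by auto
    next
      case False then show ?thesis using e[of p'] pq \<open>p \<noteq> p'\<close> by auto
    qed
  qed
  moreover have "q = q'"
  proof (rule ccontr)
    assume "q \<noteq> q'"
    then show False
    proof (cases "q < q'")
      case True then show ?thesis using e[of q] pq \<open>p = p'\<close> by auto
    next
      case False then show ?thesis using e[of q'] pq \<open>p = p'\<close> \<open>q \<noteq> q'\<close> by auto
    qed
  qed
  ultimately show "p = p' \<and> q = q'" by simp
qed


lemma dec_map_upt: "dec (map f [k..<n]) \<longleftrightarrow> (\<forall>i j. i < j \<longrightarrow> j < n - k \<longrightarrow> f (k + j) \<le> f (k + i))"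
  by (simp add: dec_def sorted_wrt_iff_nth_less)

lemma drop_zw: "drop k (zw n p q) = map (\<lambda>i. if i < p \<or> i = q then 1 else 2) [k..<n]"
  by (simp add: zw_def drop_map)

definition zval :: "nat \<Rightarrow> nat \<Rightarrow> nat \<Rightarrow> nat" where
  "zval n p q = (if p = n then n else if q < n - 1 then n - 1 - q else n - p)"

lemma dsuf_zw: assumes "(p,q) \<in> ZD n" shows "dsuf (zw n p q) = zval n p q"
proof -
  have pq: "2 \<le> p" "p \<le> n" "q = n \<or> (p < q \<and> q < n)" using assms by (auto simp: ZD_def)
  show ?thesis
  proof (cases "p = n")
    case True
    then have "q = n" using pq by auto
    have "zw n p q = replicate n 1"
      by (rule nth_equalityI) (auto simp: zw_nth len_zw True)
    then show ?thesis using True dsuf_rep[of n] by (simp add: zval_def)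
  next
    case False
    then have pn: "p < n" using pq by simp
    show ?thesis
    proof (cases "q < n - 1")
      case True
      then have pq2: "p < q" using pq by auto
      have "dsuf (zw n p q) = n - 1 - q"
      proof (rule dsuf_eqI)
        show "n - 1 - q \<le> length (zw n p q)" by (simp add: len_zw)
        have e: "length (zw n p q) - (n - 1 - q) = Suc q" using True by (simp add: len_zw)
        show "dec (drop (length (zw n p q) - (n - 1 - q)) (zw n p q))"
          unfolding e drop_zw dec_map_upt using pq2 by auto
        have e2: "length (zw n p q) - Suc (n - 1 - q) = q" using True by (simp add: len_zw)
        show "\<not> dec (drop (length (zw n p q) - Suc (n - 1 - q)) (zw n p q))"
          unfolding e2 drop_zw dec_map_upt using pq2 True
          by (auto intro!: exI[of _ 0] exI[of _ 1])
      qed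
      then show ?thesis using True False by (simp add: zval_def)
    next
      case False2: False
      have "dsuf (zw n p q) = n - p"
      proof (rule dsuf_eqI)
        show "n - p \<le> length (zw n p q)" by (simp add: len_zw)
        have e: "length (zw n p q) - (n - p) = p" using pn by (simp add: len_zw)
        show "dec (drop (length (zw n p q) - (n - p)) (zw n p q))"
          unfolding e drop_zw dec_map_upt using pq False2 by auto
        have e2: "length (zw n p q) - Suc (n - p) = p - 1" using pn pq by (simp add: len_zw)
        show "\<not> dec (drop (length (zw n p q) - Suc (n - p)) (zw n p q))"
          unfolding e2 drop_zw dec_map_upt
        proof
          assume h: "\<forall>i j. i < j \<longrightarrow> j < n - (p - 1) \<longrightarrow>
            (if p - 1 + j < p \<or> p - 1 + j = q then 1 else 2) \<le> (if p - 1 + i < p \<or> p - 1 + i = q then 1 else (2::nat))"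
          have "(if p - 1 + 1 < p \<or> p - 1 + 1 = q then 1 else 2) \<le> (if p - 1 + 0 < p \<or> p - 1 + 0 = q then 1 else (2::nat))"
            using h[rule_format, of 0 1] pn pq by linarith
          moreover have "p - 1 + 1 = p" "p - 1 + 0 < p" using pq by auto
          ultimately show False using pq pn by auto
        qed
      qed
      then show ?thesis using False False2 by (simp add: zval_def)
    qed
  qed
qed

lemma Z_char:
  assumes w: "w \<in> AS n" and n: "2 \<le> n" and w1: "w ! 1 = 1"
  shows "\<exists>pq\<in>ZD n. w = (\<lambda>(p,q). zw n p q) pq"
proof -
  have len: "length w = n" and r: "rg 0 w" and c1: "\<not> C1 w" and c2: "\<not> C2 w"
    using w by (auto simp: AS_def av_def)
  have "w \<noteq> []" using len n by auto
  then have w0: "w ! 0 = 1" using rg_first[OF r] by blast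
  have pos: "1 \<le> w ! i" if "i < n" for i using rg_pos[OF r, of "w!i"] that len by auto
  have v12: "w ! i = 1 \<or> w ! i = 2" if i: "i < n" for i
  proof (rule ccontr)
    assume "\<not> (w ! i = 1 \<or> w ! i = 2)"
    then have "3 \<le> w ! i" using pos[OF i] by linarith
    then obtain r where rr: "r \<le> i" "w ! r = 2" using rg_letter[OF r, of i 2] i len by auto
    have "r \<noteq> i" using rr \<open>3 \<le> w ! i\<close> by auto
    have "r \<noteq> 0" proof assume "r = 0" then show False using rr(2) w0 by simp qed
    have "r \<noteq> 1" proof assume "r = 1" then show False using rr(2) w1 by simp qed
    have "0 < (1::nat)" "1 < r" "r < i" "i < length w"
      using \<open>r \<noteq> i\<close> \<open>r \<noteq> 0\<close> \<open>r \<noteq> 1\<close> rr i len by auto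
    moreover have "w!0 = w!1" "w!1 < w!r" "w!r < w!i" using w0 w1 rr \<open>3 \<le> w ! i\<close> by auto
    ultimately have "C1 w" unfolding C1_def by blast
    then show False using c1 by simp
  qed
  define p where "p = (if \<exists>i<n. w!i = 2 then (LEAST i. i < n \<and> w!i = 2) else n)"
  have P1: "w ! i = 1" if "i < p" "i < n" for i
  proof (cases "\<exists>i<n. w!i = 2")
    case True
    then have "\<not> (i < n \<and> w!i = 2)" using that not_less_Least[of i "\<lambda>i. i < n \<and> w!i = 2"] by (auto simp: p_def)
    then show ?thesis using v12[of i] that by auto
  next
    case False then show ?thesis using v12[of i] that by auto
  qed
  have P2: "w ! p = 2" "p < n" if "p < n"
  proof -
    have ex: "\<exists>i<n. w!i = 2" using that by (auto simp: p_def split: if_splits)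
    then show "w ! p = 2" using LeastI_ex[of "\<lambda>i. i < n \<and> w!i = 2"] by (auto simp: p_def)
  qed (use that in simp)
  have pn: "p \<le> n"
  proof (cases "\<exists>i<n. w!i = 2")
    case True
    then obtain i where "i < n" "w ! i = 2" by blast
    then have "(LEAST i. i < n \<and> w!i = 2) \<le> i" by (intro Least_le) simp
    then show ?thesis using True \<open>i < n\<close> by (simp add: p_def)
  next
    case False then show ?thesis by (auto simp: p_def)
  qed
  have p2: "2 \<le> p"
  proof (rule ccontr)
    assume "\<not> 2 \<le> p"
    then have "p = 0 \<or> p = 1" by auto
    then have "p < n" using n by auto
    then show False using P2 \<open>p = 0 \<or> p = 1\<close> w0 w1 by auto
  qed
  define q where "q = (if \<exists>i. p < i \<and> i < n \<and> w!i = 1 then (LEAST i. p < i \<and> i < n \<and> w!i = 1) else n)"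
  have Q1: "q = n \<or> (p < q \<and> q < n \<and> w!q = 1)"
  proof (cases "\<exists>i. p < i \<and> i < n \<and> w!i = 1")
    case True
    then show ?thesis using LeastI_ex[of "\<lambda>i. p < i \<and> i < n \<and> w!i = 1"] by (simp add: q_def)
  next
    case False then show ?thesis by (auto simp: q_def)
  qed
  have Q2: "w ! i = 2" if "p < i" "i < q" "i < n" for i
  proof (cases "\<exists>i. p < i \<and> i < n \<and> w!i = 1")
    case True
    then have "\<not> (p < i \<and> i < n \<and> w!i = 1)" using that not_less_Least[of i "\<lambda>i. p < i \<and> i < n \<and> w!i = 1"] by (auto simp: q_def)
    then show ?thesis using v12[of i] that by auto
  next
    case False then show ?thesis using v12[of i] that by auto
  qed
  have Q3: "w ! i = 2" if "q < i" "i < n" for i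
  proof (rule ccontr)
    assume "w ! i \<noteq> 2"
    then have wi: "w ! i = 1" using v12[OF that(2)] by simp
    have qq: "p < q" "q < n" "w!q = 1" using Q1 that by auto
    then have "0 < p" "p < q" "q < i" "i < length w" using p2 that len by auto
    moreover have "w!0 < w!p" "w!q = w!0" "w!i = w!0" using w0 P2 qq wi by auto
    ultimately have "C2 w" unfolding C2_def by blast
    then show False using c2 by simp
  qed
  have "w = zw n p q"
  proof (rule nth_equalityI)
    show "length w = length (zw n p q)" by (simp add: len len_zw)
    fix i assume i: "i < length w"
    then have i': "i < n" using len by simp
    show "w ! i = zw n p q ! i"
    proof (cases "i < p")
      case True then show ?thesis using P1[OF True i'] i' by (simp add: zw_nth)
    next
      case False
      show ?thesis
      proof (cases "i = p")
        case True
        then have "w ! i = 2" "i \<noteq> q" using P2 i' Q1 by auto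
        then show ?thesis using i' True by (simp add: zw_nth)
      next
        case False2: False
        then have pi: "p < i" using False by simp
        show ?thesis
        proof (cases "i = q")
          case True then show ?thesis using Q1 i' by (auto simp: zw_nth)
        next
          case False3: False
          then have "w ! i = 2" using Q2[OF pi _ i'] Q3[OF _ i'] by (cases "i < q") auto
          then show ?thesis using i' False3 False by (simp add: zw_nth)
        qed
      qed
    qed
  qed
  moreover have "(p, q) \<in> ZD n" using p2 pn Q1 by (auto simp: ZD_def)
  ultimately show ?thesis by (intro bexI[of _ "(p,q)"]) auto
qed


definition SD :: "nat \<Rightarrow> (nat list \<times> nat) set" where
  "SD n = (SIGMA v:(AS (n-2) - {[]}). {0..min (dsuf v) (length v - 1)})"

definition bj :: "nat list \<Rightarrow> nat \<Rightarrow> nat list" where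
  "bj v j = bld (take (length v - j) v) (drop (length v - j) v)"

lemma AS_pos: "v \<in> AS m \<Longrightarrow> \<forall>a\<in>set v. 1 \<le> a"
  by (auto simp: AS_def av_def dest: rg_pos)

lemma finite_SD: "finite (SD n)"
  unfolding SD_def by (rule finite_SigmaI) (auto intro: finite_subset[OF _ finite_AS])

lemma P1_sub: "v \<in> AS (n - 1) \<Longrightarrow> 1 \<le> n \<Longrightarrow> 1 # map Suc v \<in> AS n"
  using av_Cons_Suc[OF AS_pos] by (auto simp: AS_def)

lemma P2_sub: assumes "(v,j) \<in> SD n" "2 \<le> n" shows "bj v j \<in> AS n"
proof -
  have v: "v \<in> AS (n-2)" "v \<noteq> []" "j \<le> dsuf v" "j \<le> length v - 1" using assms by (auto simp: SD_def)
  let ?x = "take (length v - j) v" and ?y = "drop (length v - j) v"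
  have xy: "?x @ ?y = v" by simp
  have pos: "\<forall>a\<in>set (?x @ ?y). 1 \<le> a" using AS_pos[OF v(1)] by simp
  have "j \<le> length v" using v by simp
  then have "dec ?y" using dsuf_valid[of j v] v by simp
  moreover have "av v" using v by (simp add: AS_def)
  ultimately have "av (bld ?x ?y)" using av_bld[OF pos] by simp
  moreover have "length (bld ?x ?y) = n" using len_bld[OF pos] v assms(2) by (simp add: AS_def)
  ultimately show ?thesis by (simp add: AS_def bj_def)
qed

lemma P3_sub: "(p,q) \<in> ZD n \<Longrightarrow> zw n p q \<in> AS n"
  using zw_av by (simp add: AS_def len_zw)

lemma map_Suc_pred: "\<forall>a\<in>set t. 1 \<le> a \<Longrightarrow> map Suc (map (\<lambda>a. a - 1) t) = t"
  by (induction t) auto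

lemma decomp_sub:
  assumes w: "w \<in> AS n" and n: "2 \<le> n"
  shows "w \<in> (\<lambda>v. 1 # map Suc v) ` AS (n-1) \<union> (\<lambda>(v,j). bj v j) ` SD n \<union> (\<lambda>(p,q). zw n p q) ` ZD n"
proof (cases "w ! 1 = 1")
  case True
  then show ?thesis using Z_char[OF w n] by blast
next
  case False
  have len: "length w = n" and r: "rg 0 w" and c2: "\<not> C2 w" and avw: "av w"
    using w by (auto simp: AS_def av_def)
  obtain a t where at: "w = a # t" using len n by (cases w) auto
  have a1: "a = 1" using rg_first[OF r] at by simp
  have tpos: "\<forall>b\<in>set t. 1 \<le> b" using AS_pos[OF w] at by simp
  show ?thesis
  proof (cases "1 \<in> set t")
    case False
    define v where "v = map (\<lambda>a. a - 1) t"
    have tv: "map Suc v = t" using map_Suc_pred[OF tpos] by (simp add: v_def)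
    have vpos: "\<forall>b\<in>set v. 1 \<le> b"
    proof
      fix b assume "b \<in> set v"
      then obtain c where c: "c \<in> set t" "b = c - 1" by (auto simp: v_def)
      then have "1 \<le> c" "c \<noteq> 1" using tpos False by auto
      then show "1 \<le> b" using c by simp
    qed
    have "av v" using avw av_Cons_Suc[OF vpos] at a1 tv by simp
    moreover have "length v = n - 1" using len at by (simp add: v_def)
    ultimately have "v \<in> AS (n-1)" by (simp add: AS_def)
    moreover have "w = 1 # map Suc v" using at a1 tv by simp
    ultimately show ?thesis by blast
  next
    case True
    obtain xs zs where tx: "t = xs @ 1 # zs" "1 \<notin> set xs" using split_list_first[OF True] by blast
    have "t ! 0 \<noteq> 1" using False at by simp
    then have xsne: "xs \<noteq> []" using tx by (cases xs) auto
    have zs1: "1 \<notin> set zs"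
    proof
      assume "1 \<in> set zs"
      then obtain k where k: "k < length zs" "zs ! k = 1" by (auto simp: in_set_conv_nth)
      let ?l = "length xs + 2 + k"
      have w1: "w ! 1 = xs ! 0" using at tx xsne by (simp add: nth_append)
      have "xs ! 0 \<in> set xs" using xsne by simp
      then have "1 \<le> xs ! 0" "xs ! 0 \<noteq> 1" using tpos tx by auto
      then have "2 \<le> xs ! 0" by simp
      then have "w!0 < w!1" using w1 at a1 by simp
      moreover have "w ! Suc (length xs) = 1" using at tx by (simp add: nth_append)
      moreover have "w ! ?l = 1" using at tx k by (simp add: nth_append)
      moreover have "w ! 0 = 1" using at a1 by simp
      moreover have "0 < (1::nat)" "1 < Suc (length xs)" "Suc (length xs) < ?l" "?l < length w"
        using xsne k at tx by auto
      ultimately have "C2 w" unfolding C2_def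
        by (intro exI[of _ 0] exI[of _ 1] exI[of _ "Suc (length xs)"] exI[of _ ?l]) simp
      then show False using c2 by simp
    qed
    define x where "x = map (\<lambda>a. a - 1) xs"
    define y where "y = map (\<lambda>a. a - 1) zs"
    have xs_eq: "map Suc x = xs" using map_Suc_pred[of xs] tpos tx by (simp add: x_def)
    have zs_eq: "map Suc y = zs" using map_Suc_pred[of zs] tpos tx by (simp add: y_def)
    have wb: "w = bld x y" using at a1 tx xs_eq zs_eq by (simp add: bld_def)
    have pos: "\<forall>b\<in>set (x @ y). 1 \<le> b"
    proof
      fix b assume "b \<in> set (x @ y)"
      then have "Suc b \<in> set xs \<or> Suc b \<in> set zs" using xs_eq zs_eq by auto
      then have "Suc b \<noteq> 1" using tx(2) zs1 by metis
      then show "1 \<le> b" by simp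
    qed
    have "av (x @ y) \<and> dec y" using av_bld[OF pos] avw wb by simp
    moreover have "length (x @ y) = n - 2" using len wb len_bld[OF pos] by simp
    ultimately have vA: "x @ y \<in> AS (n-2)" by (simp add: AS_def)
    have xne: "x \<noteq> []" using xsne x_def by simp
    have "length y \<le> dsuf (x @ y)"
      using dsuf_valid[of "length y" "x @ y"] \<open>av (x @ y) \<and> dec y\<close> by simp
    moreover have "length y \<le> length (x @ y) - 1" using xne by (cases x) auto
    ultimately have "(x @ y, length y) \<in> SD n" using vA xne by (simp add: SD_def)
    moreover have "bj (x @ y) (length y) = w" using wb by (simp add: bj_def)
    ultimately have "w \<in> (\<lambda>(v,j). bj v j) ` SD n" by (metis (no_types, lifting) case_prod_conv image_eqI)
    then show ?thesis by blast
  qed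
qed

lemma decomp:
  assumes n: "2 \<le> n"
  shows "AS n = (\<lambda>v. 1 # map Suc v) ` AS (n-1) \<union> (\<lambda>(v,j). bj v j) ` SD n \<union> (\<lambda>(p,q). zw n p q) ` ZD n"
    (is "_ = ?R")
proof
  show "AS n \<subseteq> ?R" using decomp_sub[OF _ n] by blast
  show "?R \<subseteq> AS n" using P1_sub P2_sub P3_sub n by auto
qed

lemma bj_parts: assumes "(v,j) \<in> SD n"
  shows "take (length v - j) v \<noteq> []" "\<forall>a\<in>set (take (length v - j) v @ drop (length v - j) v). 1 \<le> a"
proof -
  have v: "v \<in> AS (n-2)" "v \<noteq> []" "j \<le> length v - 1" using assms by (auto simp: SD_def)
  then show "take (length v - j) v \<noteq> []" by (cases v) auto
  show "\<forall>a\<in>set (take (length v - j) v @ drop (length v - j) v). 1 \<le> a" using AS_pos[OF v(1)] by simp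
qed

lemma P1_second: "v \<in> AS m \<Longrightarrow> 1 \<le> m \<Longrightarrow> (1 # map Suc v) ! 1 \<noteq> 1"
  using AS_pos[of v m] by (cases v) (auto simp: AS_def)

lemma P2_second: "(v,j) \<in> SD n \<Longrightarrow> bj v j ! 1 \<noteq> 1"
proof -
  assume a: "(v,j) \<in> SD n"
  note b = bj_parts[OF a]
  obtain c cs where c: "take (length v - j) v = c # cs" using b(1) by (cases "take (length v - j) v") auto
  then have "1 \<le> c" using b(2) by auto
  then show ?thesis using c by (simp add: bj_def bld_def)
qed

lemma P3_second: "(p,q) \<in> ZD n \<Longrightarrow> 2 \<le> n \<Longrightarrow> zw n p q ! 1 = 1"
  by (simp add: zw_nth ZD_def)

lemma P1_tl: "v \<in> AS m \<Longrightarrow> 1 \<notin> set (tl (1 # map Suc v))"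
  using AS_pos[of v m] by auto

lemma P2_tl: "(v,j) \<in> SD n \<Longrightarrow> 1 \<in> set (tl (bj v j))"
  by (simp add: bj_def bld_def)

lemma bj_inj: "inj_on (\<lambda>(v,j). bj v j) (SD n)"
proof (rule inj_onI, clarify)
  fix v j v' j' assume a: "(v,j) \<in> SD n" "(v',j') \<in> SD n" "bj v j = bj v' j'"
  then have "take (length v - j) v = take (length v' - j') v' \<and> drop (length v - j) v = drop (length v' - j') v'"
    using bld_inj[OF bj_parts(2)[OF a(1)]] by (simp add: bj_def)
  then have "v = v'" "length (drop (length v - j) v) = length (drop (length v' - j') v')"
  proof -
    assume h: "take (length v - j) v = take (length v' - j') v' \<and> drop (length v - j) v = drop (length v' - j') v'"
    show "v = v'" using h append_take_drop_id[of "length v - j" v] append_take_drop_id[of "length v' - j'" v'] by simp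
    show "length (drop (length v - j) v) = length (drop (length v' - j') v')" using h by simp
  qed
  moreover have "j \<le> length v" "j' \<le> length v'" using a by (auto simp: SD_def)
  ultimately show "v = v' \<and> j = j'" by simp
qed

lemma sum_decomp:
  assumes n: "2 \<le> n"
  shows "(\<Sum>w\<in>AS n. g w) = (\<Sum>v\<in>AS (n-1). g (1 # map Suc v)) + (\<Sum>(v,j)\<in>SD n. g (bj v j)) + (\<Sum>(p,q)\<in>ZD n. g (zw n p q))"
proof -
  let ?A = "(\<lambda>v. 1 # map Suc v) ` AS (n-1)" and ?B = "(\<lambda>(v,j). bj v j) ` SD n" and ?C = "(\<lambda>(p,q). zw n p q) ` ZD n"
  have fin: "finite ?A" "finite ?B" "finite ?C" using finite_AS finite_SD finite_ZD by auto
  have tA: "1 \<notin> set (tl w)" if "w \<in> ?A" for w using that P1_tl by blast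
  have tB: "1 \<in> set (tl w)" if "w \<in> ?B" for w using that P2_tl by auto
  have d1: "?A \<inter> ?B = {}" using tA tB by blast
  have sA: "w ! 1 \<noteq> 1" if "w \<in> ?A" for w using that P1_second[of _ "n-1"] n by auto
  have sB: "w ! 1 \<noteq> 1" if "w \<in> ?B" for w using that P2_second by auto
  have sC: "w ! 1 = 1" if "w \<in> ?C" for w using that P3_second[OF _ n] by auto
  have d2: "(?A \<union> ?B) \<inter> ?C = {}" using sA sB sC by blast
  have "(\<Sum>w\<in>AS n. g w) = sum g (?A \<union> ?B) + sum g ?C"
    unfolding decomp[OF n] by (rule sum.union_disjoint) (use fin d2 in auto)
  also have "sum g (?A \<union> ?B) = sum g ?A + sum g ?B"
    by (rule sum.union_disjoint) (use fin d1 in auto)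
  also have "sum g ?A = (\<Sum>v\<in>AS (n-1). g (1 # map Suc v))"
    by (rule sum.reindex_cong[where l="\<lambda>v. 1 # map Suc v"]) (auto simp: inj_on_def)
  also have "sum g ?B = (\<Sum>(v,j)\<in>SD n. g (bj v j))"
    by (rule sum.reindex_cong[OF bj_inj]) auto
  also have "sum g ?C = (\<Sum>(p,q)\<in>ZD n. g (zw n p q))"
    by (rule sum.reindex_cong[OF zw_inj]) auto
  finally show ?thesis .
qed


definition Qs :: "'a::comm_ring_1 \<Rightarrow> nat \<Rightarrow> 'a" where
  "Qs u n = (\<Sum>w\<in>AS n. u ^ dsuf w)"

lemma rg_rep: "rg (Suc m) (replicate k 1)"
  by (induction k) auto

lemma rep_AS: "replicate k 1 \<in> AS k"
proof -
  have "rg 0 (replicate k 1)" using rg_rep[of 0] by (cases k) auto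
  moreover have "\<not> C1 (replicate k 1)" "\<not> C2 (replicate k 1)" by (auto simp: C1_def C2_def)
  ultimately show ?thesis by (simp add: AS_def av_def)
qed

lemma AS0: "AS 0 = {[]}"
  by (auto simp: AS_def av_def C1_def C2_def)

lemma AS1: "AS 1 = {[1]}"
proof
  show "{[1]} \<subseteq> AS 1" using rep_AS[of 1] by simp
  show "AS 1 \<subseteq> {[1]}"
  proof
    fix w assume "w \<in> AS 1"
    then have "length w = 1" "rg 0 w" by (auto simp: AS_def av_def)
    then obtain a where "w = [a]" "1 \<le> a" "a \<le> 1" by (cases w) auto
    then show "w \<in> {[1]}" by simp
  qed
qed

lemma Qs0: "Qs u 0 = 1" by (simp add: Qs_def AS0 dsuf_Nil)
lemma Qs1: "Qs u 1 = u" unfolding Qs_def AS1 by (simp add: dsuf_single)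

lemma geo: "(1 - u) * (\<Sum>j\<in>{1..k}. u ^ j) = u - u ^ Suc k" for u :: "'a::comm_ring_1"
proof (induction k)
  case 0 then show ?case by simp
next
  case (Suc k)
  have "(1 - u) * (\<Sum>j\<in>{1..Suc k}. u ^ j) = (1 - u) * (\<Sum>j\<in>{1..k}. u ^ j) + (1 - u) * u ^ Suc k"
    by (simp add: distrib_left)
  also have "\<dots> = u - u ^ Suc k + (1 - u) * u ^ Suc k" using Suc.IH by simp
  also have "\<dots> = u - u ^ Suc (Suc k)" by (simp add: algebra_simps)
  finally show ?case .
qed

lemma S1: "2 \<le> n \<Longrightarrow> (\<Sum>v\<in>AS (n-1). u ^ dsuf (1 # map Suc v)) = Qs u (n - 1)"
  unfolding Qs_def
proof (rule sum.cong[OF refl])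
  fix v assume n: "2 \<le> n" and v: "v \<in> AS (n-1)"
  then have ne: "v \<noteq> []" by (auto simp: AS_def)
  have "hd v \<in> set v" using ne by simp
  then have "1 \<le> hd v" using AS_pos[OF v] by blast
  then have "dsuf (1 # map Suc v) = dsuf (map Suc v)" using ne by (intro dsuf_Cons_lt) (auto simp: hd_map)
  then show "u ^ dsuf (1 # map Suc v) = u ^ dsuf v" by (simp add: dsuf_map_Suc)
qed

lemma dsuf_bj: assumes "(v,j) \<in> SD n" shows "dsuf (bj v j) = (if j = 0 then Suc (dsuf v) else j)"
proof -
  have v: "v \<in> AS (n-2)" "v \<noteq> []" "j \<le> dsuf v" "j \<le> length v - 1" using assms by (auto simp: SD_def)
  have pos: "\<forall>a\<in>set v. 1 \<le> a" using AS_pos[OF v(1)] .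
  show ?thesis
  proof (cases "j = 0")
    case True
    then have "bj v j = bld v []" by (simp add: bj_def)
    then show ?thesis using dsuf_bld_Nil[OF v(2) pos] True by simp
  next
    case False
    let ?y = "drop (length v - j) v"
    have jl: "j \<le> length v" using v by simp
    have "?y \<noteq> []" using False jl by simp
    moreover have "dec ?y" using dsuf_valid[OF jl] v by simp
    moreover have "\<forall>a\<in>set ?y. 1 \<le> a" using pos by (auto dest: in_set_dropD)
    ultimately have "dsuf (bj v j) = length ?y" unfolding bj_def by (rule dsuf_bld)
    then show ?thesis using False jl by simp
  qed
qed

lemma S2: "(\<Sum>(v,j)\<in>SD n. u ^ dsuf (bj v j)) =
   (\<Sum>v\<in>AS (n-2) - {[]}. u ^ Suc (dsuf v) + (\<Sum>j\<in>{1..min (dsuf v) (length v - 1)}. u ^ j))"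
proof -
  have "(\<Sum>(v,j)\<in>SD n. u ^ dsuf (bj v j)) = (\<Sum>(v,j)\<in>SD n. u ^ (if j = 0 then Suc (dsuf v) else j))"
    by (rule sum.cong) (auto simp: dsuf_bj)
  also have "\<dots> = (\<Sum>v\<in>AS (n-2) - {[]}. \<Sum>j\<in>{0..min (dsuf v) (length v - 1)}. u ^ (if j = 0 then Suc (dsuf v) else j))"
    unfolding SD_def by (rule sum.Sigma[symmetric]) (auto intro: finite_subset[OF _ finite_AS])
  also have "\<dots> = (\<Sum>v\<in>AS (n-2) - {[]}. u ^ Suc (dsuf v) + (\<Sum>j\<in>{1..min (dsuf v) (length v - 1)}. u ^ j))"
  proof (rule sum.cong[OF refl])
    fix v
    have "(\<Sum>j\<in>{0..min (dsuf v) (length v - 1)}. u ^ (if j = 0 then Suc (dsuf v) else j))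
      = u ^ Suc (dsuf v) + (\<Sum>j\<in>{Suc 0..min (dsuf v) (length v - 1)}. u ^ (if j = 0 then Suc (dsuf v) else j))"
      by (subst sum.atLeast_Suc_atMost) auto
    also have "(\<Sum>j\<in>{Suc 0..min (dsuf v) (length v - 1)}. u ^ (if j = 0 then Suc (dsuf v) else j))
      = (\<Sum>j\<in>{1..min (dsuf v) (length v - 1)}. u ^ j)" by (rule sum.cong) auto
    finally show "(\<Sum>j\<in>{0..min (dsuf v) (length v - 1)}. u ^ (if j = 0 then Suc (dsuf v) else j))
      = u ^ Suc (dsuf v) + (\<Sum>j\<in>{1..min (dsuf v) (length v - 1)}. u ^ j)" .
  qed
  finally show ?thesis .
qed

lemma S2_term:
  fixes u :: "'a::comm_ring_1"
  assumes "1 \<le> m" "d \<le> m"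
  shows "(1 - u) * (u ^ Suc d + (\<Sum>j\<in>{1..min d (m - 1)}. u ^ j)) =
     u - u^2 * u ^ d - (if d = m then (1 - u) * u ^ m else 0)"
proof (cases "d = m")
  case True
  have "min d (m - 1) = m - 1" using True by simp
  then have g: "(1 - u) * (\<Sum>j\<in>{1..min d (m - 1)}. u ^ j) = u - u ^ m" using geo[of u "m - 1"] assms by simp
  have "(1 - u) * (u ^ Suc d + (\<Sum>j\<in>{1..min d (m - 1)}. u ^ j)) = (1 - u) * u ^ Suc d + (1 - u) * (\<Sum>j\<in>{1..min d (m - 1)}. u ^ j)"
    by (simp add: distrib_left)
  also have "\<dots> = (1 - u) * u ^ Suc m + (u - u ^ m)" using g True by simp
  also have "\<dots> = u - u^2 * u ^ m - (1 - u) * u ^ m" by (simp add: algebra_simps power2_eq_square)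
  finally show ?thesis using True by simp
next
  case False
  have "min d (m - 1) = d" using False assms by simp
  then have g: "(1 - u) * (\<Sum>j\<in>{1..min d (m - 1)}. u ^ j) = u - u ^ Suc d" using geo[of u d] by simp
  have "(1 - u) * (u ^ Suc d + (\<Sum>j\<in>{1..min d (m - 1)}. u ^ j)) = (1 - u) * u ^ Suc d + (1 - u) * (\<Sum>j\<in>{1..min d (m - 1)}. u ^ j)"
    by (simp add: distrib_left)
  also have "\<dots> = (1 - u) * u ^ Suc d + (u - u ^ Suc d)" using g by simp
  also have "\<dots> = u - u^2 * u ^ d" by (simp add: algebra_simps power2_eq_square)
  finally show ?thesis using False by simp
qed

lemma full_unique: "{v \<in> AS m. dsuf v = m} = {replicate m 1}"
proof
  show "{replicate m 1} \<subseteq> {v \<in> AS m. dsuf v = m}" using rep_AS[of m] dsuf_rep[of m] by simp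
  show "{v \<in> AS m. dsuf v = m} \<subseteq> {replicate m 1}"
  proof
    fix v assume "v \<in> {v \<in> AS m. dsuf v = m}"
    then have "v \<in> AS m" "dsuf v = m" by auto
    then have "rg 0 v" "dsuf v = length v" "length v = m" by (auto simp: AS_def av_def)
    then have "v = replicate (length v) 1" using dsuf_full by blast
    then show "v \<in> {replicate m 1}" using \<open>length v = m\<close> by simp
  qed
qed

lemma rec_main:
  fixes u :: "'a::comm_ring_1"
  assumes n: "2 \<le> n"
  shows "(1 - u) * Qs u n = (1 - u) * Qs u (n - 1)
     + (if 3 \<le> n then u * of_nat (card (AS (n-2))) - u^2 * Qs u (n-2) - (1 - u) * u ^ (n - 2) else 0)
     + (1 - u) * (\<Sum>(p,q)\<in>ZD n. u ^ zval n p q)"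
proof -
  have Z: "(\<Sum>(p,q)\<in>ZD n. u ^ dsuf (zw n p q)) = (\<Sum>(p,q)\<in>ZD n. u ^ zval n p q)"
    by (rule sum.cong) (auto simp: dsuf_zw)
  have dec: "Qs u n = Qs u (n - 1) + (\<Sum>v\<in>AS (n-2) - {[]}. u ^ Suc (dsuf v) + (\<Sum>j\<in>{1..min (dsuf v) (length v - 1)}. u ^ j))
     + (\<Sum>(p,q)\<in>ZD n. u ^ zval n p q)"
    unfolding Qs_def sum_decomp[OF n] S1[OF n, unfolded Qs_def] S2 Z ..
  have mid: "(1 - u) * (\<Sum>v\<in>AS (n-2) - {[]}. u ^ Suc (dsuf v) + (\<Sum>j\<in>{1..min (dsuf v) (length v - 1)}. u ^ j))
     = (if 3 \<le> n then u * of_nat (card (AS (n-2))) - u^2 * Qs u (n-2) - (1 - u) * u ^ (n - 2) else 0)"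
  proof (cases "3 \<le> n")
    case False
    then have "n = 2" using n by simp
    then show ?thesis by (simp add: AS0)
  next
    case True
    have ne: "AS (n-2) - {[]} = AS (n-2)" using True by (auto simp: AS_def)
    have "(1 - u) * (\<Sum>v\<in>AS (n-2) - {[]}. u ^ Suc (dsuf v) + (\<Sum>j\<in>{1..min (dsuf v) (length v - 1)}. u ^ j))
      = (\<Sum>v\<in>AS (n-2). u - u^2 * u ^ dsuf v - (if dsuf v = n - 2 then (1 - u) * u ^ (n - 2) else 0))"
      unfolding ne sum_distrib_left
    proof (rule sum.cong[OF refl])
      fix v assume v: "v \<in> AS (n-2)"
      then have l: "length v = n - 2" by (simp add: AS_def)
      show "(1 - u) * (u ^ Suc (dsuf v) + (\<Sum>j\<in>{1..min (dsuf v) (length v - 1)}. u ^ j)) =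
         u - u\<^sup>2 * u ^ dsuf v - (if dsuf v = n - 2 then (1 - u) * u ^ (n - 2) else 0)"
        using S2_term[of "n - 2" "dsuf v" u] True dsuf_le[of v] l by simp
    qed
    also have "\<dots> = (\<Sum>v\<in>AS (n-2). u) - (\<Sum>v\<in>AS (n-2). u^2 * u ^ dsuf v)
        - (\<Sum>v\<in>AS (n-2). if dsuf v = n - 2 then (1 - u) * u ^ (n - 2) else 0)"
      by (simp add: sum_subtractf)
    also have "(\<Sum>v\<in>AS (n-2). if dsuf v = n - 2 then (1 - u) * u ^ (n - 2) else 0)
       = (\<Sum>v\<in>{v \<in> AS (n-2). dsuf v = n - 2}. (1 - u) * u ^ (n - 2))"
      by (rule sym, rule sum.inter_filter[OF finite_AS])
    also have "\<dots> = (1 - u) * u ^ (n - 2)" unfolding full_unique by simp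
    finally show ?thesis using True by (simp add: Qs_def sum_distrib_left mult.commute)
  qed
  show ?thesis using dec mid by (simp add: algebra_simps)
qed


definition Zs :: "'a::comm_ring_1 \<Rightarrow> nat \<Rightarrow> 'a" where
  "Zs u n = (\<Sum>(p,q)\<in>ZD n. u ^ zval n p q)"

lemma ZD_split: assumes "2 \<le> n"
  shows "ZD n = insert (n,n) ((\<lambda>p. (p,n)) ` {2..<n} \<union> (\<lambda>p. (p,n-1)) ` {2..<n-1}
            \<union> (\<lambda>(q,p). (p,q)) ` (SIGMA q:{3..<n-1}. {2..<q}))"
  using assms by (auto simp: ZD_def image_iff)

lemma Zs_split:
  fixes u :: "'a::comm_ring_1"
  assumes n: "2 \<le> n"
  shows "Zs u n = u ^ n + (\<Sum>p\<in>{2..<n}. u ^ (n - p)) + (\<Sum>p\<in>{2..<n-1}. u ^ (n - p))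
     + (\<Sum>q\<in>{3..<n-1}. of_nat (q - 2) * u ^ (n - 1 - q))"
proof -
  let ?A = "(\<lambda>p. (p,n)) ` {2..<n}" and ?B = "(\<lambda>p. (p,n-1)) ` {2..<n-1}"
    and ?C = "(\<lambda>(q,p). (p,q)) ` (SIGMA q:{3..<n-1}. {2..<q})"
  let ?g = "\<lambda>(p,q). u ^ zval n p q"
  have fin: "finite ?A" "finite ?B" "finite ?C" by auto
  have "Zs u n = sum ?g (insert (n,n) (?A \<union> ?B \<union> ?C))" unfolding Zs_def ZD_split[OF n] ..
  also have "\<dots> = ?g (n,n) + sum ?g (?A \<union> ?B \<union> ?C)"
    by (rule sum.insert) (use fin in auto)
  also have "sum ?g (?A \<union> ?B \<union> ?C) = sum ?g (?A \<union> ?B) + sum ?g ?C"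
    by (rule sum.union_disjoint) (use fin in auto)
  also have "sum ?g (?A \<union> ?B) = sum ?g ?A + sum ?g ?B"
    by (rule sum.union_disjoint) (use fin in auto)
  also have "sum ?g ?A = (\<Sum>p\<in>{2..<n}. u ^ (n - p))"
    by (subst sum.reindex) (auto simp: inj_on_def zval_def intro!: sum.cong)
  also have "sum ?g ?B = (\<Sum>p\<in>{2..<n-1}. u ^ (n - p))"
    by (subst sum.reindex) (auto simp: inj_on_def zval_def intro!: sum.cong)
  also have "sum ?g ?C = (\<Sum>(q,p)\<in>(SIGMA q:{3..<n-1}. {2..<q}). u ^ (n - 1 - q))"
    by (subst sum.reindex) (auto simp: inj_on_def zval_def intro!: sum.cong)
  also have "\<dots> = (\<Sum>q\<in>{3..<n-1}. \<Sum>p\<in>{2..<q}. u ^ (n - 1 - q))"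
    by (rule sum.Sigma[symmetric]) auto
  also have "\<dots> = (\<Sum>q\<in>{3..<n-1}. of_nat (q - 2) * u ^ (n - 1 - q))"
    by (rule sum.cong) auto
  finally show ?thesis by (simp add: zval_def)
qed

definition bb :: "'a::comm_ring_1 \<Rightarrow> nat \<Rightarrow> 'a" where
  "bb u m = (if m = 0 then 0 else u ^ m)"

definition Zconv :: "'a::comm_ring_1 \<Rightarrow> nat \<Rightarrow> 'a" where
  "Zconv u n = (if 2 \<le> n then u ^ n else 0)
     + (\<Sum>i\<le>n. (if 2 \<le> i then 1 else 0) * bb u (n - i))
     + (\<Sum>i\<le>n. (if 3 \<le> i then 1 else 0) * (u * bb u (n - i)))
     + (\<Sum>i\<le>n. of_nat (i - 3) * bb u (n - i))"

lemma Zs_conv: "Zs u n = Zconv u n"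
proof (cases "2 \<le> n")
  case False
  then have "ZD n = {}" by (auto simp: ZD_def)
  moreover have "(\<Sum>i\<le>n. (if 2 \<le> i then 1 else 0) * bb u (n - i)) = 0"
    "(\<Sum>i\<le>n. (if 3 \<le> i then 1 else 0) * (u * bb u (n - i))) = 0"
    "(\<Sum>i\<le>n. of_nat (i - 3) * bb u (n - i)) = 0"
    using False by (auto intro!: sum.neutral)
  ultimately show ?thesis using False by (simp add: Zs_def Zconv_def)
next
  case True
  have p1: "(\<Sum>i\<le>n. (if 2 \<le> i then 1 else 0) * bb u (n - i)) = (\<Sum>p\<in>{2..<n}. u ^ (n - p))"
    by (rule sum.mono_neutral_cong_right) (auto simp: bb_def)
  have "(\<Sum>i\<le>n. (if 3 \<le> i then 1 else 0) * (u * bb u (n - i))) = (\<Sum>i\<in>{3..<n}. u * u ^ (n - i))"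
    by (rule sum.mono_neutral_cong_right) (auto simp: bb_def)
  also have "\<dots> = (\<Sum>i\<in>{2+1..<(n-1)+1}. u * u ^ (n - i))" using True by simp
  also have "\<dots> = (\<Sum>p\<in>{2..<n-1}. u * u ^ (n - (p + 1)))" by (rule sum.shift_bounds_nat_ivl)
  also have "\<dots> = (\<Sum>p\<in>{2..<n-1}. u ^ (n - p))"
  proof (rule sum.cong[OF refl])
    fix p assume "p \<in> {2..<n-1}"
    then have "n - p = Suc (n - (p + 1))" by auto
    then show "u * u ^ (n - (p + 1)) = u ^ (n - p)" by simp
  qed
  finally have p2: "(\<Sum>i\<le>n. (if 3 \<le> i then 1 else 0) * (u * bb u (n - i))) = (\<Sum>p\<in>{2..<n-1}. u ^ (n - p))" .
  have "(\<Sum>i\<le>n. of_nat (i - 3) * bb u (n - i)) = (\<Sum>i\<in>{4..<n}. of_nat (i - 3) * u ^ (n - i))"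
    by (rule sum.mono_neutral_cong_right) (auto simp: bb_def)
  also have "\<dots> = (\<Sum>i\<in>{3+1..<(n-1)+1}. of_nat (i - 3) * u ^ (n - i))" using True by simp
  also have "\<dots> = (\<Sum>q\<in>{3..<n-1}. of_nat (q + 1 - 3) * u ^ (n - (q + 1)))" by (rule sum.shift_bounds_nat_ivl)
  also have "\<dots> = (\<Sum>q\<in>{3..<n-1}. of_nat (q - 2) * u ^ (n - 1 - q))"
    by (rule sum.cong) auto
  finally have p3: "(\<Sum>i\<le>n. of_nat (i - 3) * bb u (n - i)) = (\<Sum>q\<in>{3..<n-1}. of_nat (q - 2) * u ^ (n - 1 - q))" .
  show ?thesis unfolding Zs_split[OF True] Zconv_def p1 p2 p3 using True by simp
qed


definition ee :: "real fps \<Rightarrow> nat \<Rightarrow> real fps" where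
  "ee u n = (if n = 0 then 0 else Qs u n)"

definition Nn :: "nat \<Rightarrow> real fps" where
  "Nn n = (if n = 0 then 0 else of_nat (card (AS n)))"

lemma Zconv_small: "n < 2 \<Longrightarrow> Zconv u n = 0"
proof -
  assume "n < 2"
  then have "ZD n = {}" by (auto simp: ZD_def)
  then show ?thesis using Zs_conv[of u n] by (simp add: Zs_def)
qed

lemma Qs1': "Qs u (Suc 0) = u" using Qs1 by simp

lemma pern: "(1 - u) * ee u n = (1 - u) * (if n = 1 then u else 0) + (1 - u) * (if n = 0 then 0 else ee u (n - 1))
   + (if n < 2 then 0 else u * Nn (n - 2) - u^2 * ee u (n - 2) - (1 - u) * bb u (n - 2)) + (1 - u) * Zconv u n"
proof -
  consider "n = 0" | "n = 1" | "n = 2" | "3 \<le> n" by linarith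
  then show ?thesis
  proof cases
    case 1 then show ?thesis by (simp add: ee_def Zconv_small)
  next
    case 2 then show ?thesis by (simp add: ee_def Zconv_small Qs1')
  next
    case 3
    then show ?thesis using rec_main[of 2 u] by (simp add: ee_def Nn_def bb_def Zs_conv[unfolded Zs_def] Qs1' numeral_2_eq_2)
  next
    case 4
    then show ?thesis using rec_main[of n u] by (simp add: ee_def Nn_def bb_def Zs_conv[unfolded Zs_def])
  qed
qed

lemma ser_shift2: "ser (\<lambda>n. if n < 2 then 0 else R (n - 2)) = fps_X^2 * ser R"
proof -
  have "(\<lambda>n. if n < 2 then 0 else R (n - 2)) = (\<lambda>n. if n = 0 then 0 else (\<lambda>k. if k = 0 then 0 else R (k - 1)) (n - 1))"
    by (rule ext) (auto simp: numeral_2_eq_2)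
  moreover have "ser (\<lambda>k. if k = 0 then 0 else R (k - 1)) = fps_X * ser R" by (rule ser_shift)
  ultimately show ?thesis using ser_shift[of "\<lambda>k. if k = 0 then 0 else R (k - 1)"]
    by (simp add: power2_eq_square mult.assoc)
qed

definition GG :: "real fps \<Rightarrow> real fps" where "GG u = ser (\<lambda>m. u ^ m)"
definition HH :: "real fps" where "HH = Abs_fps (\<lambda>_. 1)"

lemma GG_eq: "GG u = 1 + fps_X * (u * GG u)"
proof -
  have "(\<lambda>m. u ^ m) = (\<lambda>m. (if m = 0 then 1 else 0) + (if m = 0 then 0 else u * u ^ (m - 1)))"
    by (rule ext) (simp add: power_eq_if)
  then have "GG u = ser (\<lambda>m. (if m = 0 then 1 else 0) + (if m = 0 then 0 else u * u ^ (m - 1)))" by (simp add: GG_def)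
  also have "\<dots> = ser (\<lambda>m. if m = 0 then 1 else 0) + ser (\<lambda>m. if m = 0 then 0 else u * u ^ (m - 1))" by (rule ser_add)
  also have "ser (\<lambda>m. if m = 0 then 1 else 0) = (1::real fps)" using ser_delta[of 0 "1::real fps"] by simp
  also have "ser (\<lambda>m. if m = 0 then 0 else u * u ^ (m - 1)) = fps_X * (u * GG u)"
    by (simp add: ser_shift[of "\<lambda>m. u * u ^ m"] ser_cmult GG_def)
  finally show ?thesis .
qed

lemma GG_rel: "(1 - fps_X * u) * GG u = 1"
  using GG_eq[of u] by (simp add: algebra_simps)

lemma HH_rel: "(1 - fps_X) * HH = 1"
  by (rule fps_ext) (simp add: HH_def algebra_simps fps_mult_nth_conv_upto_subdegree_left)

lemma ser_bb: "ser (bb u) = fps_X * (u * GG u)"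
proof -
  have "bb u = (\<lambda>m. if m = 0 then 0 else u * u ^ (m - 1))" by (rule ext) (simp add: bb_def power_eq_if)
  then show ?thesis by (simp add: ser_shift[of "\<lambda>m. u * u ^ m"] ser_cmult GG_def)
qed

lemma HH2_nth: "(HH * HH) $ n = real (n + 1)"
  by (simp add: fps_mult_nth HH_def)

lemma a1: "ser (\<lambda>i. if 2 \<le> i then 1 else 0 :: real fps) = fps_X^2 * HH"
proof -
  have "(\<lambda>i::nat. if 2 \<le> i then 1 else 0 :: real fps) = (\<lambda>i. fps_const (if 2 \<le> i then 1 else 0))" by (auto simp: fun_eq_iff)
  then have "ser (\<lambda>i. if 2 \<le> i then 1 else 0 :: real fps) = Abs_fps (\<lambda>i. if 2 \<le> i then 1 else 0)" by (simp add: ser_const)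
  also have "\<dots> = fps_X^2 * HH" by (rule fps_ext) (simp add: fps_X_power_mult_nth HH_def)
  finally show ?thesis .
qed

lemma a2: "ser (\<lambda>i. if 3 \<le> i then 1 else 0 :: real fps) = fps_X^3 * HH"
proof -
  have "(\<lambda>i::nat. if 3 \<le> i then 1 else 0 :: real fps) = (\<lambda>i. fps_const (if 3 \<le> i then 1 else 0))" by (auto simp: fun_eq_iff)
  then have "ser (\<lambda>i. if 3 \<le> i then 1 else 0 :: real fps) = Abs_fps (\<lambda>i. if 3 \<le> i then 1 else 0)" by (simp add: ser_const)
  also have "\<dots> = fps_X^3 * HH" by (rule fps_ext) (simp add: fps_X_power_mult_nth HH_def)
  finally show ?thesis .
qed

lemma a3: "ser (\<lambda>i. of_nat (i - 3) :: real fps) = fps_X^4 * (HH * HH)"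
proof -
  have "(\<lambda>i. of_nat (i - 3) :: real fps) = (\<lambda>i. fps_const (real (i - 3)))" by (auto simp: fun_eq_iff fps_of_nat)
  then have "ser (\<lambda>i. of_nat (i - 3) :: real fps) = Abs_fps (\<lambda>i. real (i - 3))" by (simp add: ser_const)
  also have "\<dots> = fps_X^4 * (HH * HH)" by (rule fps_ext) (simp add: fps_X_power_mult_nth HH2_nth)
  finally show ?thesis .
qed

definition Zser :: "real fps \<Rightarrow> real fps" where
  "Zser u = fps_X^2 * (u^2 * GG u) + (fps_X^2 * HH) * (fps_X * (u * GG u))
    + (fps_X^3 * HH) * (u * (fps_X * (u * GG u))) + (fps_X^4 * (HH * HH)) * (fps_X * (u * GG u))"

lemma ser_Zconv: "ser (Zconv u) = Zser u"
proof -
  have f1: "(\<lambda>n. if 2 \<le> n then u ^ n else 0) = (\<lambda>n. if n < 2 then 0 else u^2 * u ^ (n - 2))"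
  proof (rule ext)
    fix n :: nat
    show "(if 2 \<le> n then u ^ n else 0) = (if n < 2 then 0 else u^2 * u ^ (n - 2))"
    proof (cases "n < 2")
      case False
      then have "n = 2 + (n - 2)" by simp
      then have "u ^ n = u^2 * u ^ (n - 2)" by (metis power_add)
      then show ?thesis using False by simp
    qed simp
  qed
  have "ser (\<lambda>n. if 2 \<le> n then u ^ n else 0) = fps_X^2 * (u^2 * GG u)"
    unfolding f1 using ser_shift2[of "\<lambda>m. u^2 * u ^ m"] ser_cmult[of "u^2" "\<lambda>m. u ^ m"] by (simp add: GG_def)
  moreover have "ser (\<lambda>n. \<Sum>i\<le>n. (if 2 \<le> i then 1 else 0) * bb u (n - i)) = (fps_X^2 * HH) * (fps_X * (u * GG u))"
    using ser_conv[of "\<lambda>i. if 2 \<le> i then 1 else 0" "bb u"] by (simp only: a1 ser_bb)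
  moreover have "ser (\<lambda>n. \<Sum>i\<le>n. (if 3 \<le> i then 1 else 0) * (u * bb u (n - i))) = (fps_X^3 * HH) * (u * (fps_X * (u * GG u)))"
    using ser_conv[of "\<lambda>i. if 3 \<le> i then 1 else 0" "\<lambda>m. u * bb u m"] ser_cmult[of u "bb u"] by (simp only: a2 ser_bb)
  moreover have "ser (\<lambda>n. \<Sum>i\<le>n. of_nat (i - 3) * bb u (n - i)) = (fps_X^4 * (HH * HH)) * (fps_X * (u * GG u))"
    using ser_conv[of "\<lambda>i. of_nat (i - 3)" "bb u"] by (simp only: a3 ser_bb)
  ultimately show ?thesis unfolding Zconv_def Zser_def ser_add by simp
qed


lemma ser_main:
  "(1 - u) * ser (ee u) = (1 - u) * (fps_X * u) + (1 - u) * (fps_X * ser (ee u))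
    + fps_X^2 * (u * ser Nn - u^2 * ser (ee u) - (1 - u) * (fps_X * (u * GG u))) + (1 - u) * Zser u"
proof -
  have "ser (\<lambda>n. (1 - u) * ee u n) = ser (\<lambda>n. (1 - u) * (if n = 1 then u else 0) + (1 - u) * (if n = 0 then 0 else ee u (n - 1))
   + (if n < 2 then 0 else u * Nn (n - 2) - u^2 * ee u (n - 2) - (1 - u) * bb u (n - 2)) + (1 - u) * Zconv u n)"
    by (rule arg_cong[where f=ser], rule ext, rule pern)
  also have "\<dots> = ser (\<lambda>n. (1 - u) * (if n = 1 then u else 0)) + ser (\<lambda>n. (1 - u) * (if n = 0 then 0 else ee u (n - 1)))
     + ser (\<lambda>n. if n < 2 then 0 else u * Nn (n - 2) - u^2 * ee u (n - 2) - (1 - u) * bb u (n - 2)) + ser (\<lambda>n. (1 - u) * Zconv u n)"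
    by (simp only: ser_add)
  also have "ser (\<lambda>n. (1 - u) * (if n = 1 then u else 0)) = (1 - u) * (fps_X * u)"
    using ser_cmult[of "1 - u" "\<lambda>n. if n = 1 then u else 0"] ser_delta[of 1 u] by simp
  also have "ser (\<lambda>n. (1 - u) * (if n = 0 then 0 else ee u (n - 1))) = (1 - u) * (fps_X * ser (ee u))"
    using ser_cmult[of "1 - u" "\<lambda>n. if n = 0 then 0 else ee u (n - 1)"] ser_shift[of "ee u"] by simp
  also have "ser (\<lambda>n. if n < 2 then 0 else u * Nn (n - 2) - u^2 * ee u (n - 2) - (1 - u) * bb u (n - 2))
     = fps_X^2 * (u * ser Nn - u^2 * ser (ee u) - (1 - u) * (fps_X * (u * GG u)))"
    using ser_shift2[of "\<lambda>m. u * Nn m - u^2 * ee u m - (1 - u) * bb u m"]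
    by (simp add: ser_diff ser_cmult ser_bb)
  also have "ser (\<lambda>n. (1 - u) * Zconv u n) = (1 - u) * Zser u"
    using ser_cmult[of "1 - u" "Zconv u"] ser_Zconv[of u] by simp
  finally show ?thesis by (simp add: ser_cmult)
qed

lemma step1:
  assumes K: "(1 - fps_X) * (1 - u) + u^2 * fps_X^2 = 0"
  shows "fps_X^2 * u * ser Nn = - (1 - u) * fps_X * u + (1 - u) * fps_X^3 * u * GG u - (1 - u) * Zser u"
  using ser_main[of u] K by algebra

lemma step2: "(1 - fps_X)^3 * (1 - fps_X * u) * Zser u = (1 - fps_X)^3 * fps_X^2 * u^2 + (1 - fps_X)^2 * fps_X^3 * u
   + (1 - fps_X)^2 * fps_X^4 * u^2 + (1 - fps_X) * fps_X^5 * u"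
  using GG_rel[of u] HH_rel unfolding Zser_def by algebra

lemma step3:
  fixes u S N G Z :: "real fps"
  assumes K: "(1 - fps_X) * (1 - u) + u^2 * fps_X^2 = 0"
    and s1: "fps_X^2 * u * N = - (1 - u) * fps_X * u + (1 - u) * fps_X^3 * u * G - (1 - u) * Z"
    and s2: "(1 - fps_X)^3 * (1 - fps_X * u) * Z = (1 - fps_X)^3 * fps_X^2 * u^2 + (1 - fps_X)^2 * fps_X^3 * u
   + (1 - fps_X)^2 * fps_X^4 * u^2 + (1 - fps_X) * fps_X^5 * u"
    and g: "(1 - fps_X * u) * G = 1"
    and S: "S = 1 - fps_X - 2 * fps_X^2 * u"
  shows "fps_X^2 * u * (1 - fps_X)^3 * (1 - fps_X * u) *
     (fps_const 2 * fps_X ^ 2 * (1 - fps_X) ^ 2 * (1 - 3 * fps_X + fps_X ^ 2) * (1 + N)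
      - ((1 - fps_X) ^ 2 * (1 - fps_X ^ 2) * S
           - (1 - 3 * fps_X - 2 * fps_X ^ 2 + 14 * fps_X ^ 3 - 15 * fps_X ^ 4 + 3 * fps_X ^ 5))) = 0"
proof -
  define X :: "real fps" where "X = fps_X"
  define A where "A = 2 * X ^ 2 * (1 - X) ^ 2 * (1 - 3 * X + X ^ 2)"
  have c2: "fps_const (2::real) = 2" by (simp add: fps_numeral_fps_const)
  define Zp where "Zp = (1 - X)^3 * X^2 * u^2 + (1 - X)^2 * X^3 * u + (1 - X)^2 * X^4 * u^2 + (1 - X) * X^5 * u"
  define Qp where "Qp = (1 - 3 * X - 2 * X ^ 2 + 14 * X ^ 3 - 15 * X ^ 4 + 3 * X ^ 5)"
  have e1: "(1 - X)^3 * (1 - X * u) * (X^2 * u * N) = (1 - X)^3 * (1 - X * u) * (- (1 - u) * X * u)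
      + (1 - u) * X^3 * u * (1 - X)^3 - (1 - u) * Zp"
  proof -
    have "(1 - X)^3 * (1 - X * u) * (X^2 * u * N) = (1 - X)^3 * (1 - X * u) * (- (1 - u) * X * u)
      + (1 - u) * X^3 * u * (1 - X)^3 * ((1 - X * u) * G) - (1 - u) * ((1 - X)^3 * (1 - X * u) * Z)"
      using s1 unfolding X_def[symmetric] by algebra
    then show ?thesis using g s2 unfolding X_def[symmetric] Zp_def by simp
  qed
  have e2: "X^2 * u * (1 - X)^3 * (1 - X * u) * (A * (1 + N) - ((1 - X) ^ 2 * (1 - X ^ 2) * S - Qp))
     = X^2 * u * (1 - X)^3 * (1 - X * u) * (A - (1 - X) ^ 2 * (1 - X ^ 2) * S + Qp) + A * ((1 - X)^3 * (1 - X * u) * (X^2 * u * N))"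
    by (simp add: algebra_simps)
  have e3: "X^2 * u * (1 - X)^3 * (1 - X * u) * (A - (1 - X) ^ 2 * (1 - X ^ 2) * (1 - X - 2 * X^2 * u) + Qp)
      + A * ((1 - X)^3 * (1 - X * u) * (- (1 - u) * X * u) + (1 - u) * X^3 * u * (1 - X)^3 - (1 - u) * Zp)
     = ((1 - X) * (1 - u) + u^2 * X^2) * (- 2*X^3*u + 12*X^4*u - 32*X^5*u + 48*X^6*u - 42*X^7*u + 20*X^8*u - 4*X^9*u)"
    unfolding A_def Zp_def Qp_def by algebra
  have K': "(1 - X) * (1 - u) + u^2 * X^2 = 0" using K by (simp add: X_def)
  have S': "S = 1 - X - 2 * X^2 * u" using S by (simp add: X_def)
  have "X^2 * u * (1 - X)^3 * (1 - X * u) * (A * (1 + N) - ((1 - X) ^ 2 * (1 - X ^ 2) * S - Qp))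
     = X^2 * u * (1 - X)^3 * (1 - X * u) * (A - (1 - X) ^ 2 * (1 - X ^ 2) * S + Qp) + A * ((1 - X)^3 * (1 - X * u) * (X^2 * u * N))"
    by (rule e2)
  also have "\<dots> = X^2 * u * (1 - X)^3 * (1 - X * u) * (A - (1 - X) ^ 2 * (1 - X ^ 2) * (1 - X - 2 * X^2 * u) + Qp)
      + A * ((1 - X)^3 * (1 - X * u) * (- (1 - u) * X * u) + (1 - u) * X^3 * u * (1 - X)^3 - (1 - u) * Zp)"
    by (simp only: e1 S')
  also have "\<dots> = ((1 - X) * (1 - u) + u^2 * X^2) * (- 2*X^3*u + 12*X^4*u - 32*X^5*u + 48*X^6*u - 42*X^7*u + 20*X^8*u - 4*X^9*u)"
    by (rule e3)
  also have "\<dots> = 0" by (simp only: K' mult_zero_left)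
  finally have "X^2 * u * (1 - X)^3 * (1 - X * u) * (A * (1 + N) - ((1 - X) ^ 2 * (1 - X ^ 2) * S - Qp)) = 0" .
  then show ?thesis unfolding X_def A_def Qp_def c2 .
qed


lemma F_eq: "Abs_fps (\<lambda>n. real (pcount n {[1,1,2,3], [1,2,1,1]})) = 1 + ser Nn"
proof -
  have eqN: "Nn = (\<lambda>n. fps_const (if n = 0 then 0 else real (card (AS n))))"
    by (auto simp: fun_eq_iff Nn_def fps_of_nat)
  have "ser Nn = Abs_fps (\<lambda>n. if n = 0 then 0 else real (card (AS n)))" by (subst eqN) (rule ser_const)
  moreover have "card (AS 0) = 1" by (simp add: AS0)
  ultimately show ?thesis by (intro fps_ext) (simp add: pcount_AS[simplified])
qed

theorem theorem4p22:
  fixes F :: "real fps"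
  defines "F \<equiv> Abs_fps (\<lambda>n. real (pcount n {[1,1,2,3], [1,2,1,1]}))"
  shows "fps_const 2 * fps_X ^ 2 * (1 - fps_X) ^ 2 * (1 - 3 * fps_X + fps_X ^ 2) * F
         = (1 - fps_X) ^ 2 * (1 - fps_X ^ 2) *
             fps_radical (\<lambda>k x. root k x) 2 ((1 - fps_X) * (1 - fps_X - 4 * fps_X ^ 2))
           - (1 - 3 * fps_X - 2 * fps_X ^ 2 + 14 * fps_X ^ 3 - 15 * fps_X ^ 4 + 3 * fps_X ^ 5)"
proof -
  define X :: "real fps" where "X = fps_X"
  define R :: "real fps" where "R = (1 - fps_X) * (1 - fps_X - 4 * fps_X ^ 2)"
  define S where "S = fps_radical (\<lambda>k x. root k x) 2 R"
  have R0: "R $ 0 = 1" by (simp add: R_def)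
  have R1: "R $ 1 = -2" by (simp add: R_def fps_mult_nth_1 algebra_simps)
  have hS: "S ^ 2 = R"
    using power_radical[of R "\<lambda>k x. root k x" 1] R0 by (simp add: S_def numeral_2_eq_2)
  have S0: "S $ 0 = 1" using R0 by (simp add: S_def)
  have "(S * S) $ 1 = R $ 1" using hS by (simp add: power2_eq_square)
  then have "2 * S $ 1 = -2" using S0 R1 by (simp add: fps_mult_nth_1)
  then have S1: "S $ 1 = -1" by simp
  define u where "u = Abs_fps (\<lambda>n. - S $ (n + 2) / 2)"
  have hu: "S = 1 - X - 2 * X^2 * u"
  proof (rule fps_ext)
    fix n
    have e: "1 - X - 2 * X^2 * u = 1 - X - X^2 * (fps_const 2 * u)" by (simp add: fps_numeral_fps_const mult.assoc)
    have c: "(X^2 * (fps_const 2 * u)) $ n = (if n < 2 then 0 else 2 * u $ (n - 2))"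
      by (simp add: X_def fps_X_power_mult_nth)
    show "S $ n = (1 - X - 2 * X^2 * u) $ n"
    proof (cases "n < 2")
      case True
      then have "n = 0 \<or> n = 1" by auto
      then show ?thesis unfolding e using c S0 S1 by (auto simp: X_def)
    next
      case False
      then have "n = (n - 2) + 2" by simp
      then have "S $ n = - 2 * u $ (n - 2)" by (simp add: u_def)
      then show ?thesis unfolding e using c False by (simp add: X_def)
    qed
  qed
  have "X^2 * (4 * ((1 - X) * (1 - u) + u^2 * X^2)) = 0"
  proof -
    have "X^2 * (4 * ((1 - X) * (1 - u) + u^2 * X^2)) = S^2 - R" unfolding hu R_def X_def by algebra
    then show ?thesis using hS by simp
  qed
  moreover have "X^2 \<noteq> 0" by (simp add: X_def)
  moreover have "(4::real fps) \<noteq> 0"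
  proof
    assume "(4::real fps) = 0" then have "(4::real fps) $ 0 = 0" by simp
    then show False by simp
  qed
  ultimately have K: "(1 - X) * (1 - u) + u^2 * X^2 = 0" by (metis mult_eq_0_iff)
  have nz1: "1 - X \<noteq> 0"
  proof
    assume "1 - X = 0" then have "(1 - X) $ 0 = 0" by simp
    then show False by (simp add: X_def)
  qed
  have unz: "u \<noteq> 0"
  proof
    assume "u = 0" then have "1 - X = 0" using K by simp
    then show False using nz1 by simp
  qed
  have nz2: "1 - X * u \<noteq> 0"
  proof
    assume "1 - X * u = 0" then have "(1 - X * u) $ 0 = 0" by simp
    then show False by (simp add: X_def)
  qed
  have s1: "X^2 * u * ser Nn = - (1 - u) * X * u + (1 - u) * X^3 * u * GG u - (1 - u) * Zser u"
    using step1[of u] K by (simp add: X_def)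
  have M: "X^2 * u * (1 - X)^3 * (1 - X * u) *
     (fps_const 2 * X ^ 2 * (1 - X) ^ 2 * (1 - 3 * X + X ^ 2) * (1 + ser Nn)
      - ((1 - X) ^ 2 * (1 - X ^ 2) * S
           - (1 - 3 * X - 2 * X ^ 2 + 14 * X ^ 3 - 15 * X ^ 4 + 3 * X ^ 5))) = 0"
    using step3[of u "ser Nn" "GG u" "Zser u" S] K s1 step2[of u] GG_rel[of u] hu unfolding X_def by blast
  have Mnz: "X^2 * u * (1 - X)^3 * (1 - X * u) \<noteq> 0"
    using unz nz1 nz2 by (simp add: X_def)
  have "fps_const 2 * X ^ 2 * (1 - X) ^ 2 * (1 - 3 * X + X ^ 2) * (1 + ser Nn)
      = (1 - X) ^ 2 * (1 - X ^ 2) * S - (1 - 3 * X - 2 * X ^ 2 + 14 * X ^ 3 - 15 * X ^ 4 + 3 * X ^ 5)"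
    using M Mnz by simp
  then show ?thesis unfolding F_def F_eq X_def S_def R_def .
qed


end
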